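(* Let $\mathbb{C}$ be a pointed protomodular category and let $X$ be an object of $\mathbb{C}$ with trivial center such that the generic split extension with kernel $X$ exists. A morphism $u:S\to X$ is a characteristic monomorphism if and only if the composite $c_Xu:S\to[X]$ is a Bourn-normal monomorphism.
   Context: $\mathbb{C}$ is pointed with finite limits; protomodular means the split short five lemma holds. A split extension is $X\xrightarrow{\kappa}A\underset{\beta}{\overset{\alpha}{\rightleftarrows}}B$ with $\alpha\beta=1_B$, $\kappa$ a kernel of $\alpha$. A generic split extension with kernel $X$, written $X\xrightarrow{k}[X]\ltimes X\underset{i}{\overset{p_1}{\rightleftarrows}}[X]$, is a terminal object in the category of split extensions with kernel $X$ and morphisms whose kernel component is $1_X$. The conjugation morphism $c_X:X\to[X]$ is the codomain component of the unique such morphism from $X\xrightarrow{\langle0,1\rangle}X\times X\underset{\langle1,1\rangle}{\overset{\pi_1}{\rightleftarrows}}X$ to the generic one. The center of $X$ is the terminal object among morphisms $g:B\to X$ commuting with $1_X$ (some $\varphi:B\times X\to X$ has $\varphi\langle1,0\rangle=g$, $\varphi\langle0,1\rangle=1_X$); trivial center means it is $0$. A monomorphism $m:S\to Y$ is Bourn-normal if there is an equivalence relation $(R,r_1,r_2)$ on $Y$ and $\tilde m:S\times S\to R$ with $r_1\tilde m=m\pi_1$, $r_2\tilde m=m\pi_2$ and the square $r_1\tilde m=m\pi_1$ a pullback. A morphism $u:S\to X$ is a characteristic monomorphism if for every Bourn-normal monomorphism $n:X\to Y$ the composite $nu$ is a Bourn-normal monomorphism. *)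

theory Defs
  imports Main
begin

record ('o, 'm) category =
  cobj :: "'o set"
  carr :: "'m set"
  cdom :: "'m \<Rightarrow> 'o"
  ccod :: "'m \<Rightarrow> 'o"
  cmp  :: "'m \<Rightarrow> 'm \<Rightarrow> 'm"   (* cmp C g f  =  g \<circ> f *)
  cid  :: "'o \<Rightarrow> 'm"

definition hom :: "('o,'m) category \<Rightarrow> 'o \<Rightarrow> 'o \<Rightarrow> 'm set" where
  "hom C A B = {f \<in> carr C. cdom C f = A \<and> ccod C f = B}"

definition is_category :: "('o,'m) category \<Rightarrow> bool" where
  "is_category C \<longleftrightarrow>
     (\<forall>f\<in>carr C. cdom C f \<in> cobj C \<and> ccod C f \<in> cobj C) \<and>
     (\<forall>A\<in>cobj C. cid C A \<in> hom C A A) \<and>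
     (\<forall>A B D f g. f \<in> hom C A B \<longrightarrow> g \<in> hom C B D \<longrightarrow> cmp C g f \<in> hom C A D) \<and>
     (\<forall>A B f. f \<in> hom C A B \<longrightarrow> cmp C (cid C B) f = f \<and> cmp C f (cid C A) = f) \<and>
     (\<forall>A B D E f g h. f \<in> hom C A B \<longrightarrow> g \<in> hom C B D \<longrightarrow> h \<in> hom C D E \<longrightarrow>
         cmp C h (cmp C g f) = cmp C (cmp C h g) f)"

definition is_iso :: "('o,'m) category \<Rightarrow> 'm \<Rightarrow> bool" where
  "is_iso C f \<longleftrightarrow> (\<exists>A B g. f \<in> hom C A B \<and> g \<in> hom C B A \<and>
                       cmp C g f = cid C A \<and> cmp C f g = cid C B)"

definition is_mono :: "('o,'m) category \<Rightarrow> 'm \<Rightarrow> bool" where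
  "is_mono C f \<longleftrightarrow> f \<in> carr C \<and>
     (\<forall>T a b. a \<in> hom C T (cdom C f) \<longrightarrow> b \<in> hom C T (cdom C f) \<longrightarrow>
              cmp C f a = cmp C f b \<longrightarrow> a = b)"

definition is_initial :: "('o,'m) category \<Rightarrow> 'o \<Rightarrow> bool" where
  "is_initial C Z \<longleftrightarrow> Z \<in> cobj C \<and> (\<forall>B\<in>cobj C. \<exists>!f. f \<in> hom C Z B)"

definition is_terminal :: "('o,'m) category \<Rightarrow> 'o \<Rightarrow> bool" where
  "is_terminal C Z \<longleftrightarrow> Z \<in> cobj C \<and> (\<forall>B\<in>cobj C. \<exists>!f. f \<in> hom C B Z)"

definition is_zero_obj :: "('o,'m) category \<Rightarrow> 'o \<Rightarrow> bool" where
  "is_zero_obj C Z \<longleftrightarrow> is_initial C Z \<and> is_terminal C Z"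

definition pointed :: "('o,'m) category \<Rightarrow> bool" where
  "pointed C \<longleftrightarrow> (\<exists>Z. is_zero_obj C Z)"

definition zero :: "('o,'m) category \<Rightarrow> 'o \<Rightarrow> 'o \<Rightarrow> 'm" where
  "zero C A B = (THE f. f \<in> hom C A B \<and>
      (\<exists>Z g h. is_zero_obj C Z \<and> g \<in> hom C A Z \<and> h \<in> hom C Z B \<and> f = cmp C h g))"

definition is_product :: "('o,'m) category \<Rightarrow> 'o \<Rightarrow> 'o \<Rightarrow> 'o \<Rightarrow> 'm \<Rightarrow> 'm \<Rightarrow> bool" where
  "is_product C A B P p1 p2 \<longleftrightarrow> p1 \<in> hom C P A \<and> p2 \<in> hom C P B \<and>
     (\<forall>T a b. a \<in> hom C T A \<longrightarrow> b \<in> hom C T B \<longrightarrow>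
        (\<exists>!h. h \<in> hom C T P \<and> cmp C p1 h = a \<and> cmp C p2 h = b))"

definition is_equalizer :: "('o,'m) category \<Rightarrow> 'o \<Rightarrow> 'o \<Rightarrow> 'm \<Rightarrow> 'm \<Rightarrow> 'o \<Rightarrow> 'm \<Rightarrow> bool" where
  "is_equalizer C A B f g E e \<longleftrightarrow> f \<in> hom C A B \<and> g \<in> hom C A B \<and> e \<in> hom C E A \<and>
     cmp C f e = cmp C g e \<and>
     (\<forall>T t. t \<in> hom C T A \<longrightarrow> cmp C f t = cmp C g t \<longrightarrow>
        (\<exists>!h. h \<in> hom C T E \<and> cmp C e h = t))"

definition is_pullback :: "('o,'m) category \<Rightarrow> 'o \<Rightarrow> 'o \<Rightarrow> 'o \<Rightarrow> 'm \<Rightarrow> 'm \<Rightarrow> 'o \<Rightarrow> 'm \<Rightarrow> 'm \<Rightarrow> bool" where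
  "is_pullback C A B Y f g P p q \<longleftrightarrow> f \<in> hom C A Y \<and> g \<in> hom C B Y \<and>
     p \<in> hom C P A \<and> q \<in> hom C P B \<and> cmp C f p = cmp C g q \<and>
     (\<forall>T a b. a \<in> hom C T A \<longrightarrow> b \<in> hom C T B \<longrightarrow> cmp C f a = cmp C g b \<longrightarrow>
        (\<exists>!h. h \<in> hom C T P \<and> cmp C p h = a \<and> cmp C q h = b))"

definition has_finite_limits :: "('o,'m) category \<Rightarrow> bool" where
  "has_finite_limits C \<longleftrightarrow> (\<exists>T. is_terminal C T) \<and>
     (\<forall>A\<in>cobj C. \<forall>B\<in>cobj C. \<exists>P p1 p2. is_product C A B P p1 p2) \<and>
     (\<forall>A B f g. f \<in> hom C A B \<longrightarrow> g \<in> hom C A B \<longrightarrow> (\<exists>E e. is_equalizer C A B f g E e))"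

definition is_kernel :: "('o,'m) category \<Rightarrow> 'o \<Rightarrow> 'o \<Rightarrow> 'o \<Rightarrow> 'm \<Rightarrow> 'm \<Rightarrow> bool" where
  "is_kernel C K A B k a \<longleftrightarrow> k \<in> hom C K A \<and> a \<in> hom C A B \<and> cmp C a k = zero C K B \<and>
     (\<forall>T t. t \<in> hom C T A \<longrightarrow> cmp C a t = zero C T B \<longrightarrow>
        (\<exists>!h. h \<in> hom C T K \<and> cmp C k h = t))"

definition split_ext :: "('o,'m) category \<Rightarrow> 'o \<Rightarrow> 'o \<Rightarrow> 'o \<Rightarrow> 'm \<Rightarrow> 'm \<Rightarrow> 'm \<Rightarrow> bool" where
  "split_ext C X A B \<kappa> \<alpha> \<beta> \<longleftrightarrow> \<kappa> \<in> hom C X A \<and> \<alpha> \<in> hom C A B \<and> \<beta> \<in> hom C B A \<and>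
     cmp C \<alpha> \<beta> = cid C B \<and> is_kernel C X A B \<kappa> \<alpha>"

definition protomodular :: "('o,'m) category \<Rightarrow> bool" where
  "protomodular C \<longleftrightarrow>
    (\<forall>X A B \<kappa> \<alpha> \<beta> X' A' B' \<kappa>' \<alpha>' \<beta>' k f g.
       split_ext C X A B \<kappa> \<alpha> \<beta> \<longrightarrow> split_ext C X' A' B' \<kappa>' \<alpha>' \<beta>' \<longrightarrow>
       k \<in> hom C X X' \<longrightarrow> f \<in> hom C A A' \<longrightarrow> g \<in> hom C B B' \<longrightarrow>
       cmp C f \<kappa> = cmp C \<kappa>' k \<longrightarrow> cmp C \<alpha>' f = cmp C g \<alpha> \<longrightarrow> cmp C f \<beta> = cmp C \<beta>' g \<longrightarrow>
       is_iso C k \<longrightarrow> is_iso C g \<longrightarrow> is_iso C f)"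

definition split_ext_mor :: "('o,'m) category \<Rightarrow> 'o \<Rightarrow> 'o \<Rightarrow> 'm \<Rightarrow> 'm \<Rightarrow> 'm \<Rightarrow>
    'o \<Rightarrow> 'o \<Rightarrow> 'm \<Rightarrow> 'm \<Rightarrow> 'm \<Rightarrow> 'm \<Rightarrow> 'm \<Rightarrow> bool" where
  "split_ext_mor C A B \<kappa> \<alpha> \<beta> A' B' \<kappa>' \<alpha>' \<beta>' f g \<longleftrightarrow>
     f \<in> hom C A A' \<and> g \<in> hom C B B' \<and> cmp C f \<kappa> = \<kappa>' \<and>
     cmp C \<alpha>' f = cmp C g \<alpha> \<and> cmp C f \<beta> = cmp C \<beta>' g"

text \<open>Generic split extension X --k--> G with p1 : G \<rightarrow> T, i : T \<rightarrow> G  (G = [X]\<ltimes>X, T = [X]):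
  terminal among split extensions with kernel X.\<close>
definition is_generic_split_ext :: "('o,'m) category \<Rightarrow> 'o \<Rightarrow> 'o \<Rightarrow> 'o \<Rightarrow> 'm \<Rightarrow> 'm \<Rightarrow> 'm \<Rightarrow> bool" where
  "is_generic_split_ext C X G T k p1 i \<longleftrightarrow> split_ext C X G T k p1 i \<and>
     (\<forall>A B \<kappa> \<alpha> \<beta>. split_ext C X A B \<kappa> \<alpha> \<beta> \<longrightarrow>
        (\<exists>f g. split_ext_mor C A B \<kappa> \<alpha> \<beta> G T k p1 i f g \<and>
           (\<forall>f' g'. split_ext_mor C A B \<kappa> \<alpha> \<beta> G T k p1 i f' g' \<longrightarrow> f' = f \<and> g' = g)))"

text \<open>c is the conjugation morphism c_X : X \<rightarrow> [X]: the codomain component of the morphism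
  from  X --<0,1>--> X\<times>X  (\<pi>1, <1,1>)  to the generic split extension.\<close>
definition is_conjugation :: "('o,'m) category \<Rightarrow> 'o \<Rightarrow> 'o \<Rightarrow> 'o \<Rightarrow> 'm \<Rightarrow> 'm \<Rightarrow> 'm \<Rightarrow> 'm \<Rightarrow> bool" where
  "is_conjugation C X G T k p1 i c \<longleftrightarrow>
     (\<exists>P q1 q2 d e f. is_product C X X P q1 q2 \<and>
        d \<in> hom C X P \<and> cmp C q1 d = zero C X X \<and> cmp C q2 d = cid C X \<and>
        e \<in> hom C X P \<and> cmp C q1 e = cid C X \<and> cmp C q2 e = cid C X \<and>
        split_ext_mor C P X d q1 e G T k p1 i f c)"

definition commutes_with_id :: "('o,'m) category \<Rightarrow> 'o \<Rightarrow> 'o \<Rightarrow> 'm \<Rightarrow> bool" where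
  "commutes_with_id C X B g \<longleftrightarrow> g \<in> hom C B X \<and>
     (\<exists>P p1 p2 \<phi>. is_product C B X P p1 p2 \<and> \<phi> \<in> hom C P X \<and>
        (\<forall>m. m \<in> hom C B P \<longrightarrow> cmp C p1 m = cid C B \<longrightarrow> cmp C p2 m = zero C B X \<longrightarrow>
             cmp C \<phi> m = g) \<and>
        (\<forall>m. m \<in> hom C X P \<longrightarrow> cmp C p1 m = zero C X B \<longrightarrow> cmp C p2 m = cid C X \<longrightarrow>
             cmp C \<phi> m = cid C X))"

definition is_center :: "('o,'m) category \<Rightarrow> 'o \<Rightarrow> 'o \<Rightarrow> 'm \<Rightarrow> bool" where
  "is_center C X Z z \<longleftrightarrow> commutes_with_id C X Z z \<and>
     (\<forall>B g. commutes_with_id C X B g \<longrightarrow> (\<exists>!h. h \<in> hom C B Z \<and> cmp C z h = g))"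

definition trivial_center :: "('o,'m) category \<Rightarrow> 'o \<Rightarrow> bool" where
  "trivial_center C X \<longleftrightarrow> (\<exists>Z z. is_center C X Z z \<and> is_zero_obj C Z)"

definition is_equiv_rel :: "('o,'m) category \<Rightarrow> 'o \<Rightarrow> 'o \<Rightarrow> 'm \<Rightarrow> 'm \<Rightarrow> bool" where
  "is_equiv_rel C Y R r1 r2 \<longleftrightarrow> r1 \<in> hom C R Y \<and> r2 \<in> hom C R Y \<and>
     (\<forall>T a b. a \<in> hom C T R \<longrightarrow> b \<in> hom C T R \<longrightarrow>
        cmp C r1 a = cmp C r1 b \<longrightarrow> cmp C r2 a = cmp C r2 b \<longrightarrow> a = b) \<and>
     (\<forall>T. let rel = (\<lambda>x y. \<exists>t \<in> hom C T R. cmp C r1 t = x \<and> cmp C r2 t = y) in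
        (\<forall>x \<in> hom C T Y. rel x x) \<and>
        (\<forall>x y. rel x y \<longrightarrow> rel y x) \<and>
        (\<forall>x y z. rel x y \<longrightarrow> rel y z \<longrightarrow> rel x z))"

definition bourn_normal_mono :: "('o,'m) category \<Rightarrow> 'o \<Rightarrow> 'o \<Rightarrow> 'm \<Rightarrow> bool" where
  "bourn_normal_mono C S Y m \<longleftrightarrow> m \<in> hom C S Y \<and> is_mono C m \<and>
     (\<exists>R r1 r2 P \<pi>1 \<pi>2 mt. is_equiv_rel C Y R r1 r2 \<and> is_product C S S P \<pi>1 \<pi>2 \<and>
        mt \<in> hom C P R \<and> cmp C r1 mt = cmp C m \<pi>1 \<and> cmp C r2 mt = cmp C m \<pi>2 \<and>
        is_pullback C R S Y r1 m P mt \<pi>1)"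

definition characteristic_mono :: "('o,'m) category \<Rightarrow> 'o \<Rightarrow> 'o \<Rightarrow> 'm \<Rightarrow> bool" where
  "characteristic_mono C S X u \<longleftrightarrow> u \<in> hom C S X \<and>
     (\<forall>Y n. bourn_normal_mono C X Y n \<longrightarrow> bourn_normal_mono C S Y (cmp C n u))"

end

theory Submission
  imports Defs
begin

locale pcat =
  fixes C :: "('o,'m) category"
  assumes cat: "is_category C" and pt: "pointed C" and fl: "has_finite_limits C"
    and pm: "protomodular C"
begin

abbreviation arr where "arr f \<equiv> f \<in> carr C"
abbreviation dm where "dm f \<equiv> cdom C f"
abbreviation cd where "cd f \<equiv> ccod C f"
abbreviation cp (infixr "\<cdot>" 55) where "g \<cdot> f \<equiv> cmp C g f"
abbreviation idm where "idm A \<equiv> cid C A"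
abbreviation Ob where "Ob \<equiv> cobj C"
abbreviation Hom where "Hom A B \<equiv> hom C A B"
abbreviation Z0 where "Z0 A B \<equiv> zero C A B"

lemma hom_iff[simp]: "f \<in> Hom A B \<longleftrightarrow> arr f \<and> dm f = A \<and> cd f = B" by (simp add: hom_def)

lemma arr_ob[simp]: "arr f \<Longrightarrow> dm f \<in> Ob" "arr f \<Longrightarrow> cd f \<in> Ob"
  using cat unfolding is_category_def by auto

lemma comp_arr[simp]: "arr f \<Longrightarrow> arr g \<Longrightarrow> dm g = cd f \<Longrightarrow> arr (g \<cdot> f)"
  and comp_dm[simp]: "arr f \<Longrightarrow> arr g \<Longrightarrow> dm g = cd f \<Longrightarrow> dm (g \<cdot> f) = dm f"
  and comp_cd[simp]: "arr f \<Longrightarrow> arr g \<Longrightarrow> dm g = cd f \<Longrightarrow> cd (g \<cdot> f) = cd g"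
proof -
  assume a: "arr f" "arr g" "dm g = cd f"
  have "f \<in> Hom (dm f) (cd f)" "g \<in> Hom (cd f) (cd g)" using a by auto
  then have "g \<cdot> f \<in> Hom (dm f) (cd g)" using cat unfolding is_category_def by blast
  then show "arr (g \<cdot> f)" "dm (g \<cdot> f) = dm f" "cd (g \<cdot> f) = cd g" by auto
qed

lemma assoc[simp]: "arr f \<Longrightarrow> arr g \<Longrightarrow> arr h \<Longrightarrow> dm g = cd f \<Longrightarrow> dm h = cd g \<Longrightarrow>
   (h \<cdot> g) \<cdot> f = h \<cdot> (g \<cdot> f)"
proof -
  assume a: "arr f" "arr g" "arr h" "dm g = cd f" "dm h = cd g"
  have "f \<in> Hom (dm f) (cd f)" "g \<in> Hom (cd f) (cd g)" "h \<in> Hom (cd g) (cd h)" using a by auto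
  then show ?thesis using cat unfolding is_category_def by metis
qed

lemma id_arr[simp]: "A \<in> Ob \<Longrightarrow> arr (idm A)" and id_dm[simp]: "A \<in> Ob \<Longrightarrow> dm (idm A) = A"
  and id_cd[simp]: "A \<in> Ob \<Longrightarrow> cd (idm A) = A"
  using cat unfolding is_category_def by auto

lemma id_left[simp]: "arr f \<Longrightarrow> cd f = B \<Longrightarrow> idm B \<cdot> f = f"
  and id_right[simp]: "arr f \<Longrightarrow> dm f = A \<Longrightarrow> f \<cdot> idm A = f"
proof -
  assume "arr f"
  then have "f \<in> Hom (dm f) (cd f)" by auto
  then show "cd f = B \<Longrightarrow> idm B \<cdot> f = f" "dm f = A \<Longrightarrow> f \<cdot> idm A = f"
    using cat unfolding is_category_def by blast+
qed

lemma zero_obj_ex: obtains Z where "is_zero_obj C Z" using pt unfolding pointed_def by blast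

lemma zo_ob: "is_zero_obj C Z \<Longrightarrow> Z \<in> Ob" by (simp add: is_zero_obj_def is_initial_def)
lemma zo_to: "is_zero_obj C Z \<Longrightarrow> A \<in> Ob \<Longrightarrow> \<exists>g. g \<in> Hom A Z"
  unfolding is_zero_obj_def is_terminal_def by blast
lemma zo_from: "is_zero_obj C Z \<Longrightarrow> A \<in> Ob \<Longrightarrow> \<exists>g. g \<in> Hom Z A"
  unfolding is_zero_obj_def is_initial_def by blast
lemma zo_to_uniq: "is_zero_obj C Z \<Longrightarrow> g \<in> Hom A Z \<Longrightarrow> g' \<in> Hom A Z \<Longrightarrow> g = g'"
  unfolding is_zero_obj_def is_terminal_def
  by (metis hom_iff arr_ob(1))
lemma zo_from_uniq: "is_zero_obj C Z \<Longrightarrow> g \<in> Hom Z A \<Longrightarrow> g' \<in> Hom Z A \<Longrightarrow> g = g'"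
  unfolding is_zero_obj_def is_initial_def
  by (metis hom_iff arr_ob(2))

lemma zero_char:
  assumes Z: "is_zero_obj C Z" and g: "g \<in> Hom A Z" and h: "h \<in> Hom Z B"
  shows "Z0 A B = h \<cdot> g"
  unfolding zero_def
proof (rule the_equality)
  show "h \<cdot> g \<in> Hom A B \<and> (\<exists>Z g' h'. is_zero_obj C Z \<and> g' \<in> Hom A Z \<and> h' \<in> Hom Z B \<and> h \<cdot> g = h' \<cdot> g')"
    using Z g h by auto
next
  fix f assume "f \<in> Hom A B \<and> (\<exists>Z g h. is_zero_obj C Z \<and> g \<in> Hom A Z \<and> h \<in> Hom Z B \<and> f = h \<cdot> g)"
  then obtain Z' g' h' where Z': "is_zero_obj C Z'" "g' \<in> Hom A Z'" "h' \<in> Hom Z' B" "f = h' \<cdot> g'"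
    by blast
  obtain v where v: "v \<in> Hom Z Z'" using zo_from[OF Z zo_ob[OF Z'(1)]] by blast
  have "g' = v \<cdot> g" using zo_to_uniq[OF Z'(1) Z'(2), of "v \<cdot> g"] v g by auto
  moreover have "h = h' \<cdot> v" using zo_from_uniq[OF Z h, of "h' \<cdot> v"] v Z' by auto
  ultimately show "f = h \<cdot> g" using Z' v g by auto
qed

lemma zero_arr[simp]: "A \<in> Ob \<Longrightarrow> B \<in> Ob \<Longrightarrow> arr (Z0 A B)"
  and zero_dm[simp]: "A \<in> Ob \<Longrightarrow> B \<in> Ob \<Longrightarrow> dm (Z0 A B) = A"
  and zero_cd[simp]: "A \<in> Ob \<Longrightarrow> B \<in> Ob \<Longrightarrow> cd (Z0 A B) = B"
proof -
  assume a: "A \<in> Ob" "B \<in> Ob"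
  obtain Z where Z: "is_zero_obj C Z" by (rule zero_obj_ex)
  obtain g h where "g \<in> Hom A Z" "h \<in> Hom Z B" using zo_to[OF Z a(1)] zo_from[OF Z a(2)] by blast
  then have "Z0 A B \<in> Hom A B" using zero_char[OF Z] Z by (auto simp: zo_ob)
  then show "arr (Z0 A B)" "dm (Z0 A B) = A" "cd (Z0 A B) = B" by auto
qed

lemma zero_factor: "is_zero_obj C Z \<Longrightarrow> g \<in> Hom A Z \<Longrightarrow> h \<in> Hom Z B \<Longrightarrow> h \<cdot> g = Z0 A B"
  by (rule zero_char[symmetric])

lemma zero_comp_l[simp]: "arr f \<Longrightarrow> dm f = B \<Longrightarrow> A \<in> Ob \<Longrightarrow> f \<cdot> Z0 A B = Z0 A (cd f)"
proof -
  assume a: "arr f" "dm f = B" "A \<in> Ob"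
  obtain Z where Z: "is_zero_obj C Z" by (rule zero_obj_ex)
  obtain g h where gh: "g \<in> Hom A Z" "h \<in> Hom Z B" using zo_to[OF Z a(3)] zo_from[OF Z, of B] a by auto
  have "Z0 A B = h \<cdot> g" by (rule zero_char[OF Z gh])
  moreover have "Z0 A (cd f) = (f \<cdot> h) \<cdot> g" by (rule zero_char[OF Z gh(1)]) (use gh a in auto)
  ultimately show ?thesis using gh a by auto
qed

lemma zero_comp_r[simp]: "arr f \<Longrightarrow> cd f = B \<Longrightarrow> D \<in> Ob \<Longrightarrow> Z0 B D \<cdot> f = Z0 (dm f) D"
proof -
  assume a: "arr f" "cd f = B" "D \<in> Ob"
  obtain Z where Z: "is_zero_obj C Z" by (rule zero_obj_ex)
  obtain g h where gh: "g \<in> Hom B Z" "h \<in> Hom Z D" using zo_to[OF Z, of B] zo_from[OF Z a(3)] a by auto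
  have "Z0 B D = h \<cdot> g" by (rule zero_char[OF Z gh])
  moreover have "Z0 (dm f) D = h \<cdot> (g \<cdot> f)" by (rule zero_char[OF Z _ gh(2)]) (use gh a in auto)
  ultimately show ?thesis using gh a by auto
qed


lemma prod_ex: "A \<in> Ob \<Longrightarrow> B \<in> Ob \<Longrightarrow> \<exists>P p1 p2. is_product C A B P p1 p2"
  using fl unfolding has_finite_limits_def by blast

lemma eq_ex: "f \<in> Hom A B \<Longrightarrow> g \<in> Hom A B \<Longrightarrow> \<exists>E e. is_equalizer C A B f g E e"
  using fl unfolding has_finite_limits_def by blast

lemma prod_homs: assumes "is_product C A B P p1 p2"
  shows "arr p1" "dm p1 = P" "cd p1 = A" "arr p2" "dm p2 = P" "cd p2 = B" "P \<in> Ob" "A \<in> Ob" "B \<in> Ob"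
  using assms unfolding is_product_def by (auto dest: arr_ob)

lemma prod_pair: "is_product C A B P p1 p2 \<Longrightarrow> a \<in> Hom T A \<Longrightarrow> b \<in> Hom T B \<Longrightarrow>
   \<exists>h. h \<in> Hom T P \<and> p1 \<cdot> h = a \<and> p2 \<cdot> h = b"
  unfolding is_product_def by blast

lemma prod_uniq: assumes "is_product C A B P p1 p2" "h \<in> Hom T P" "h' \<in> Hom T P"
   "p1 \<cdot> h = p1 \<cdot> h'" "p2 \<cdot> h = p2 \<cdot> h'" shows "h = h'"
proof -
  have "p1 \<cdot> h \<in> Hom T A" "p2 \<cdot> h \<in> Hom T B" using assms prod_homs[OF assms(1)] by auto
  then show ?thesis using assms unfolding is_product_def by metis
qed

lemma eq_homs: assumes "is_equalizer C A B f g E e"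
  shows "arr e" "dm e = E" "cd e = A" "f \<cdot> e = g \<cdot> e" "E \<in> Ob" "f \<in> Hom A B" "g \<in> Hom A B" "A \<in> Ob" "B \<in> Ob"
  using assms unfolding is_equalizer_def by (auto dest: arr_ob)

lemma eq_pair: "is_equalizer C A B f g E e \<Longrightarrow> t \<in> Hom T A \<Longrightarrow> f \<cdot> t = g \<cdot> t \<Longrightarrow>
   \<exists>h. h \<in> Hom T E \<and> e \<cdot> h = t"
  unfolding is_equalizer_def by blast

lemma eq_uniq: assumes "is_equalizer C A B f g E e" "h \<in> Hom T E" "h' \<in> Hom T E"
   "e \<cdot> h = e \<cdot> h'" shows "h = h'"
proof -
  have e: "arr e" "dm e = E" "cd e = A" "f \<cdot> e = g \<cdot> e" "f \<in> Hom A B" "g \<in> Hom A B"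
    using eq_homs[OF assms(1)] by auto
  have "e \<cdot> h \<in> Hom T A" using assms e by auto
  moreover have "f \<cdot> (e \<cdot> h) = g \<cdot> (e \<cdot> h)" using e assms
    by (simp flip: assoc)
  ultimately show ?thesis using assms unfolding is_equalizer_def by metis
qed

lemma pb_homs: assumes "is_pullback C A B Y f g P p q"
  shows "arr f" "dm f = A" "cd f = Y" "arr g" "dm g = B" "cd g = Y"
    "arr p" "dm p = P" "cd p = A" "arr q" "dm q = P" "cd q = B" "f \<cdot> p = g \<cdot> q" "P \<in> Ob" "A \<in> Ob" "B \<in> Ob" "Y \<in> Ob"
  using assms unfolding is_pullback_def by (auto dest: arr_ob)

lemma pb_pair: "is_pullback C A B Y f g P p q \<Longrightarrow> a \<in> Hom T A \<Longrightarrow> b \<in> Hom T B \<Longrightarrow> f \<cdot> a = g \<cdot> b \<Longrightarrow>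
   \<exists>h. h \<in> Hom T P \<and> p \<cdot> h = a \<and> q \<cdot> h = b"
  unfolding is_pullback_def by blast

lemma pb_uniq: assumes "is_pullback C A B Y f g P p q" "h \<in> Hom T P" "h' \<in> Hom T P"
   "p \<cdot> h = p \<cdot> h'" "q \<cdot> h = q \<cdot> h'" shows "h = h'"
proof -
  note H = pb_homs[OF assms(1)]
  have "p \<cdot> h \<in> Hom T A" "q \<cdot> h \<in> Hom T B" using assms H by auto
  moreover have "f \<cdot> (p \<cdot> h) = g \<cdot> (q \<cdot> h)" using assms H by (simp flip: assoc)
  ultimately show ?thesis using assms unfolding is_pullback_def by metis
qed

lemma pb_ex: assumes f: "f \<in> Hom A Y" and g: "g \<in> Hom B Y"
  shows "\<exists>P p q. is_pullback C A B Y f g P p q"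
proof -
  have AB: "A \<in> Ob" "B \<in> Ob" using f g by auto
  obtain Q r1 r2 where Q: "is_product C A B Q r1 r2" using prod_ex[OF AB] by blast
  note QH = prod_homs[OF Q]
  obtain E e where E: "is_equalizer C Q Y (f \<cdot> r1) (g \<cdot> r2) E e"
    using eq_ex[of "f \<cdot> r1" Q Y "g \<cdot> r2"] f g QH by auto
  note EH = eq_homs[OF E]
  have "is_pullback C A B Y f g E (r1 \<cdot> e) (r2 \<cdot> e)"
    unfolding is_pullback_def
  proof (intro conjI allI impI)
    show "f \<in> Hom A Y" "g \<in> Hom B Y" by fact+
    show "r1 \<cdot> e \<in> Hom E A" "r2 \<cdot> e \<in> Hom E B" using QH EH by auto
    show "f \<cdot> r1 \<cdot> e = g \<cdot> r2 \<cdot> e" using EH QH f g by (simp flip: assoc)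
    fix T a b assume a: "a \<in> Hom T A" and b: "b \<in> Hom T B" and ab: "f \<cdot> a = g \<cdot> b"
    obtain h where h: "h \<in> Hom T Q" "r1 \<cdot> h = a" "r2 \<cdot> h = b" using prod_pair[OF Q a b] by blast
    have "(f \<cdot> r1) \<cdot> h = (g \<cdot> r2) \<cdot> h" using h ab QH f g by auto
    then obtain h2 where h2: "h2 \<in> Hom T E" "e \<cdot> h2 = h" using eq_pair[OF E h(1)] by blast
    show "\<exists>!h. h \<in> Hom T E \<and> (r1 \<cdot> e) \<cdot> h = a \<and> (r2 \<cdot> e) \<cdot> h = b"
    proof (rule ex1I[of _ h2])
      show "h2 \<in> Hom T E \<and> (r1 \<cdot> e) \<cdot> h2 = a \<and> (r2 \<cdot> e) \<cdot> h2 = b" using h2 h QH EH by auto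
      fix h3 assume h3: "h3 \<in> Hom T E \<and> (r1 \<cdot> e) \<cdot> h3 = a \<and> (r2 \<cdot> e) \<cdot> h3 = b"
      have "e \<cdot> h3 = h" using prod_uniq[OF Q, of "e \<cdot> h3" T h] h3 h QH EH by auto
      then show "h3 = h2" using eq_uniq[OF E, of h3 T h2] h2 h3 by auto
    qed
  qed
  then show ?thesis by blast
qed

lemma ker_homs: assumes "is_kernel C K A B k f"
  shows "arr k" "dm k = K" "cd k = A" "arr f" "dm f = A" "cd f = B" "f \<cdot> k = Z0 K B" "K \<in> Ob" "A \<in> Ob" "B \<in> Ob"
  using assms unfolding is_kernel_def by (auto dest: arr_ob)

lemma ker_pair: "is_kernel C K A B k f \<Longrightarrow> t \<in> Hom T A \<Longrightarrow> f \<cdot> t = Z0 T B \<Longrightarrow>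
   \<exists>h. h \<in> Hom T K \<and> k \<cdot> h = t"
  unfolding is_kernel_def by blast

lemma ker_uniq: assumes "is_kernel C K A B k f" "h \<in> Hom T K" "h' \<in> Hom T K"
   "k \<cdot> h = k \<cdot> h'" shows "h = h'"
proof -
  note H = ker_homs[OF assms(1)]
  have "k \<cdot> h \<in> Hom T A" using assms H by auto
  moreover have "f \<cdot> (k \<cdot> h) = Z0 T B" using assms H by (simp flip: assoc)
  ultimately show ?thesis using assms unfolding is_kernel_def by metis
qed

lemma ker_ex: assumes f: "f \<in> Hom A B" shows "\<exists>K k. is_kernel C K A B k f"
proof -
  have AB: "A \<in> Ob" "B \<in> Ob" using f by auto
  obtain E e where E: "is_equalizer C A B f (Z0 A B) E e" using eq_ex[of f A B "Z0 A B"] f AB by auto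
  note EH = eq_homs[OF E]
  have "is_kernel C E A B e f" unfolding is_kernel_def
  proof (intro conjI allI impI)
    show "e \<in> Hom E A" "f \<in> Hom A B" using EH f by auto
    show "f \<cdot> e = Z0 E B" using EH AB by auto
    fix T t assume t: "t \<in> Hom T A" "f \<cdot> t = Z0 T B"
    then have "f \<cdot> t = Z0 A B \<cdot> t" using AB by auto
    then obtain h where h: "h \<in> Hom T E" "e \<cdot> h = t" using eq_pair[OF E t(1)] by blast
    show "\<exists>!h. h \<in> Hom T E \<and> e \<cdot> h = t"
      using h eq_uniq[OF E] by metis
  qed
  then show ?thesis by blast
qed

lemma monoI: assumes "m \<in> Hom M A" "\<And>T a b. a \<in> Hom T M \<Longrightarrow> b \<in> Hom T M \<Longrightarrow> m \<cdot> a = m \<cdot> b \<Longrightarrow> a = b"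
  shows "is_mono C m"
  using assms unfolding is_mono_def by auto

lemma monoD: assumes "is_mono C m" "a \<in> Hom T M" "b \<in> Hom T M" "m \<cdot> a = m \<cdot> b" "dm m = M"
  shows "a = b"
  using assms unfolding is_mono_def by auto

lemma iso_inv: assumes "is_iso C f" "f \<in> Hom A B"
  shows "\<exists>g. g \<in> Hom B A \<and> g \<cdot> f = idm A \<and> f \<cdot> g = idm B"
  using assms unfolding is_iso_def by auto

lemma id_iso: "A \<in> Ob \<Longrightarrow> is_iso C (idm A)"
  unfolding is_iso_def by (rule exI[of _ A], rule exI[of _ A], rule exI[of _ "idm A"]) auto

lemma se_homs: assumes "split_ext C X A B k a b"
  shows "arr k" "dm k = X" "cd k = A" "arr a" "dm a = A" "cd a = B" "arr b" "dm b = B" "cd b = A"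
    "a \<cdot> b = idm B" "is_kernel C X A B k a" "X \<in> Ob" "A \<in> Ob" "B \<in> Ob"
  using assms unfolding split_ext_def by (auto dest: arr_ob)

lemma ssf: assumes E: "split_ext C X A B k a b" and E': "split_ext C X A' B k' a' b'"
  and f: "f \<in> Hom A A'" and fk: "f \<cdot> k = k'" and af: "a' \<cdot> f = a" and fb: "f \<cdot> b = b'"
  shows "\<exists>g. g \<in> Hom A' A \<and> g \<cdot> f = idm A \<and> f \<cdot> g = idm A'"
proof -
  note H = se_homs[OF E] and H' = se_homs[OF E']
  have "is_iso C f"
  proof -
    have P: "\<And>k0 g. split_ext C X A B k a b \<Longrightarrow> split_ext C X A' B k' a' b' \<Longrightarrow>
       k0 \<in> Hom X X \<Longrightarrow> f \<in> Hom A A' \<Longrightarrow> g \<in> Hom B B \<Longrightarrow>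
       f \<cdot> k = k' \<cdot> k0 \<Longrightarrow> a' \<cdot> f = g \<cdot> a \<Longrightarrow> f \<cdot> b = b' \<cdot> g \<Longrightarrow>
       is_iso C k0 \<Longrightarrow> is_iso C g \<Longrightarrow> is_iso C f"
      using pm unfolding protomodular_def by blast
    show ?thesis
      by (rule P[OF E E', of "idm X" "idm B"]) (use f fk af fb H H' id_iso in auto)
  qed
  then show ?thesis using iso_inv f by blast
qed


lemma eq_lift: "x \<cdot> y = z \<Longrightarrow> arr w \<Longrightarrow> arr y \<Longrightarrow> arr x \<Longrightarrow> dm y = cd w \<Longrightarrow> dm x = cd y \<Longrightarrow>
   x \<cdot> (y \<cdot> w) = z \<cdot> w"
  by (simp flip: assoc)

lemma eq_lift2: "x \<cdot> y = x' \<cdot> y' \<Longrightarrow> arr w \<Longrightarrow> arr y \<Longrightarrow> arr x \<Longrightarrow> dm y = cd w \<Longrightarrow> dm x = cd y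
   \<Longrightarrow> arr y' \<Longrightarrow> arr x' \<Longrightarrow> dm y' = cd w \<Longrightarrow> dm x' = cd y' \<Longrightarrow>
   x \<cdot> (y \<cdot> w) = x' \<cdot> (y' \<cdot> w)"
  by (simp flip: assoc)

lemma prod_ker: assumes P: "is_product C A X P p1 p2" and d: "d \<in> Hom X P" "p1 \<cdot> d = Z0 X A" "p2 \<cdot> d = idm X"
  shows "is_kernel C X P A d p1"
  unfolding is_kernel_def
proof (intro conjI allI impI)
  note H = prod_homs[OF P]
  show "d \<in> Hom X P" "p1 \<in> Hom P A" "p1 \<cdot> d = Z0 X A" using d H by auto
  fix T t assume t: "t \<in> Hom T P" "p1 \<cdot> t = Z0 T A"
  have e: "d \<cdot> (p2 \<cdot> t) = t"
  proof (rule prod_uniq[OF P, of _ T])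
    show "d \<cdot> p2 \<cdot> t \<in> Hom T P" "t \<in> Hom T P" using t d H by auto
    have "p1 \<cdot> (d \<cdot> (p2 \<cdot> t)) = Z0 X A \<cdot> (p2 \<cdot> t)" by (rule eq_lift[OF d(2)]) (use t d H in simp_all)
    then show "p1 \<cdot> d \<cdot> p2 \<cdot> t = p1 \<cdot> t" using t H by auto
    have "p2 \<cdot> (d \<cdot> (p2 \<cdot> t)) = idm X \<cdot> (p2 \<cdot> t)" by (rule eq_lift[OF d(3)]) (use t d H in simp_all)
    then show "p2 \<cdot> d \<cdot> p2 \<cdot> t = p2 \<cdot> t" using t H by auto
  qed
  show "\<exists>!h. h \<in> Hom T X \<and> d \<cdot> h = t"
  proof (rule ex1I[of _ "p2 \<cdot> t"])
    show "p2 \<cdot> t \<in> Hom T X \<and> d \<cdot> p2 \<cdot> t = t" using e t H by auto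
    fix h assume h: "h \<in> Hom T X \<and> d \<cdot> h = t"
    have "p2 \<cdot> (d \<cdot> h) = idm X \<cdot> h" by (rule eq_lift[OF d(3)]) (use h d H in simp_all)
    then show "h = p2 \<cdot> t" using h by auto
  qed
qed

lemma cover: assumes E: "split_ext C X A B k a b" and m: "m \<in> Hom M A" "is_mono C m"
  and k': "k' \<in> Hom X M" "m \<cdot> k' = k" and b': "b' \<in> Hom B M" "m \<cdot> b' = b"
  shows "\<exists>g. g \<in> Hom A M \<and> m \<cdot> g = idm A \<and> g \<cdot> m = idm M"
proof -
  note H = se_homs[OF E]
  have E2: "split_ext C X M B k' (a \<cdot> m) b'"
    unfolding split_ext_def
  proof (intro conjI)
    show "k' \<in> Hom X M" "a \<cdot> m \<in> Hom M B" "b' \<in> Hom B M" using k' m H b' by auto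
    show "(a \<cdot> m) \<cdot> b' = idm B" using b' m H by auto
    show "is_kernel C X M B k' (a \<cdot> m)" unfolding is_kernel_def
    proof (intro conjI allI impI)
      show "k' \<in> Hom X M" "a \<cdot> m \<in> Hom M B" using k' m H by auto
      show "(a \<cdot> m) \<cdot> k' = Z0 X B" using k' m H ker_homs[OF H(11)] by auto
      fix T t assume t: "t \<in> Hom T M" "(a \<cdot> m) \<cdot> t = Z0 T B"
      obtain h where h: "h \<in> Hom T X" "k \<cdot> h = m \<cdot> t"
        using ker_pair[OF H(11), of "m \<cdot> t" T] t m H by auto
      have "k' \<cdot> h = t"
        by (rule monoD[OF m(2), of _ T]) (use h t k' m in auto)
      show "\<exists>!h. h \<in> Hom T X \<and> k' \<cdot> h = t"
      proof (rule ex1I[of _ h])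
        show "h \<in> Hom T X \<and> k' \<cdot> h = t" using h \<open>k' \<cdot> h = t\<close> by auto
        fix h2 assume h2: "h2 \<in> Hom T X \<and> k' \<cdot> h2 = t"
        have "m \<cdot> (k' \<cdot> h2) = k \<cdot> h2" by (rule eq_lift[OF k'(2)]) (use h2 k' m in simp_all)
        then have "k \<cdot> h2 = m \<cdot> t" using h2 by simp
        then show "h2 = h" using ker_uniq[OF H(11), of h2 T h] h h2 by auto
      qed
    qed
  qed
  show ?thesis using ssf[OF E2 E m(1) k'(2) _ b'(2)] m H by auto
qed

lemma jepi: assumes E: "split_ext C X A B k a b" and xy: "x \<in> Hom A D" "y \<in> Hom A D"
  and xk: "x \<cdot> k = y \<cdot> k" and xb: "x \<cdot> b = y \<cdot> b" shows "x = y"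
proof -
  note H = se_homs[OF E]
  obtain Q e where Q: "is_equalizer C A D x y Q e" using eq_ex[OF xy] by blast
  note QH = eq_homs[OF Q]
  have mono: "is_mono C e" by (rule monoI[of _ Q A]) (use QH eq_uniq[OF Q] in auto)
  obtain k' where k': "k' \<in> Hom X Q" "e \<cdot> k' = k" using eq_pair[OF Q, of k X] H xk by auto
  obtain b' where b': "b' \<in> Hom B Q" "e \<cdot> b' = b" using eq_pair[OF Q, of b B] H xb by auto
  obtain g where g: "g \<in> Hom A Q" "e \<cdot> g = idm A" using cover[OF E _ mono k' b'] QH by auto
  have "x = x \<cdot> (e \<cdot> g)" using g xy by simp
  also have "\<dots> = (x \<cdot> e) \<cdot> g" by (rule assoc[symmetric]) (use g xy QH in simp_all)
  also have "\<dots> = (y \<cdot> e) \<cdot> g" by (simp only: QH(4))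
  also have "\<dots> = y \<cdot> (e \<cdot> g)" by (rule assoc) (use g xy QH in simp_all)
  also have "\<dots> = y" using g xy by simp
  finally show ?thesis .
qed

lemma kernel_mono: assumes f: "f \<in> Hom A B"
  and H0: "\<And>W t. t \<in> Hom W A \<Longrightarrow> f \<cdot> t = Z0 W B \<Longrightarrow> t = Z0 W A"
  shows "is_mono C f"
proof -
  obtain Q q1 q2 where Q: "is_pullback C A A B f f Q q1 q2" using pb_ex[OF f f] by blast
  note QH = pb_homs[OF Q]
  obtain dl where dl: "dl \<in> Hom A Q" "q1 \<cdot> dl = idm A" "q2 \<cdot> dl = idm A"
    using pb_pair[OF Q, of "idm A" A "idm A"] QH by auto
  obtain Z where Z: "is_zero_obj C Z" by (rule zero_obj_ex)
  have ZO: "Z \<in> Ob" using zo_ob[OF Z] .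
  have SE: "split_ext C Z Q A (Z0 Z Q) q1 dl" unfolding split_ext_def
  proof (intro conjI)
    show "Z0 Z Q \<in> Hom Z Q" "q1 \<in> Hom Q A" "dl \<in> Hom A Q" "q1 \<cdot> dl = idm A" using ZO QH dl by auto
    show "is_kernel C Z Q A (Z0 Z Q) q1" unfolding is_kernel_def
    proof (intro conjI allI impI)
      show "Z0 Z Q \<in> Hom Z Q" "q1 \<in> Hom Q A" "q1 \<cdot> Z0 Z Q = Z0 Z A" using ZO QH by auto
      fix T t assume t: "t \<in> Hom T Q" "q1 \<cdot> t = Z0 T A"
      have TO: "T \<in> Ob" using t by auto
      have "f \<cdot> (q1 \<cdot> t) = f \<cdot> (q2 \<cdot> t)" by (rule eq_lift2[OF QH(13)]) (use t QH in simp_all)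
      then have "f \<cdot> (q2 \<cdot> t) = f \<cdot> (q1 \<cdot> t)" by simp
      also have "\<dots> = Z0 T B" using t f TO by auto
      finally have "q2 \<cdot> t = Z0 T A" using H0[of "q2 \<cdot> t" T] t QH by auto
      then have tz: "t = Z0 T Q"
        using pb_uniq[OF Q t(1), of "Z0 T Q"] t QH TO by auto
      obtain h where h: "h \<in> Hom T Z" using zo_to[OF Z TO] by blast
      show "\<exists>!h. h \<in> Hom T Z \<and> Z0 Z Q \<cdot> h = t"
        using h tz zo_to_uniq[OF Z] ZO QH by auto
    qed
  qed
  have dmono: "is_mono C dl"
  proof (rule monoI[of _ A Q])
    fix T a b assume ab: "a \<in> Hom T A" "b \<in> Hom T A" "dl \<cdot> a = dl \<cdot> b"
    have "a = idm A \<cdot> a" using ab by simp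
    also have "\<dots> = q1 \<cdot> (dl \<cdot> a)" by (rule eq_lift[OF dl(2), symmetric]) (use ab dl QH in simp_all)
    also have "\<dots> = q1 \<cdot> (dl \<cdot> b)" using ab by simp
    also have "\<dots> = idm A \<cdot> b" by (rule eq_lift[OF dl(2)]) (use ab dl QH in simp_all)
    also have "\<dots> = b" using ab by simp
    finally show "a = b" .
  qed (use dl in auto)
  obtain g where g: "g \<in> Hom Q A" "dl \<cdot> g = idm Q"
    using cover[OF SE dl(1) dmono, of "Z0 Z A" "idm A"] dl ZO QH by auto
  show ?thesis
  proof (rule monoI[OF f])
    fix T a b assume ab: "a \<in> Hom T A" "b \<in> Hom T A" "f \<cdot> a = f \<cdot> b"
    obtain w where w: "w \<in> Hom T Q" "q1 \<cdot> w = a" "q2 \<cdot> w = b" using pb_pair[OF Q ab] by blast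
    have wd: "dl \<cdot> (g \<cdot> w) = w" using g w dl by (simp flip: assoc)
    have "a = q1 \<cdot> (dl \<cdot> (g \<cdot> w))" using w wd by simp
    also have "\<dots> = idm A \<cdot> (g \<cdot> w)" by (rule eq_lift[OF dl(2)]) (use g w dl QH in simp_all)
    also have "\<dots> = q2 \<cdot> (dl \<cdot> (g \<cdot> w))" by (rule eq_lift[OF dl(3), symmetric]) (use g w dl QH in simp_all)
    also have "\<dots> = b" using w wd by simp
    finally show "a = b" .
  qed
qed

end

context pcat begin

lemma mor_pb: assumes E: "split_ext C X A B k a b" and E': "split_ext C X A' B' k' a' b'"
  and M: "split_ext_mor C A B k a b A' B' k' a' b' f g"
  shows "is_pullback C A' B B' a' g A f a"
proof -
  note H = se_homs[OF E] and H' = se_homs[OF E']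
  note KH' = ker_homs[OF H'(11)] and KH = ker_homs[OF H(11)]
  have f: "f \<in> Hom A A'" and g: "g \<in> Hom B B'" and fk: "f \<cdot> k = k'" and af: "a' \<cdot> f = g \<cdot> a"
    and fb: "f \<cdot> b = b' \<cdot> g"
    using M unfolding split_ext_mor_def by auto
  obtain Pb pa pb where Pb: "is_pullback C A' B B' a' g Pb pa pb" using pb_ex[of a' A' B' g B] H' g by auto
  note PH = pb_homs[OF Pb]
  have "a' \<cdot> (b' \<cdot> g) = g \<cdot> idm B" using g H' by (simp flip: assoc)
  then obtain s where s: "s \<in> Hom B Pb" "pa \<cdot> s = b' \<cdot> g" "pb \<cdot> s = idm B"
    using pb_pair[OF Pb, of "b' \<cdot> g" B "idm B"] g H' by auto
  have "a' \<cdot> k' = g \<cdot> Z0 X B" using KH' g H' by simp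
  then obtain kk where kk: "kk \<in> Hom X Pb" "pa \<cdot> kk = k'" "pb \<cdot> kk = Z0 X B"
    using pb_pair[OF Pb, of k' X "Z0 X B"] H' H by auto
  have SE: "split_ext C X Pb B kk pb s" unfolding split_ext_def
  proof (intro conjI)
    show "kk \<in> Hom X Pb" "pb \<in> Hom Pb B" "s \<in> Hom B Pb" "pb \<cdot> s = idm B" using kk PH s by auto
    show "is_kernel C X Pb B kk pb" unfolding is_kernel_def
    proof (intro conjI allI impI)
      show "kk \<in> Hom X Pb" "pb \<in> Hom Pb B" "pb \<cdot> kk = Z0 X B" using kk PH by auto
      fix T t assume t: "t \<in> Hom T Pb" "pb \<cdot> t = Z0 T B"
      have TO: "T \<in> Ob" using t by auto
      have "a' \<cdot> (pa \<cdot> t) = g \<cdot> (pb \<cdot> t)" by (rule eq_lift2[OF PH(13)]) (use t PH in simp_all)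
      also have "\<dots> = Z0 T B'" using t g TO H' by simp
      finally obtain h where h: "h \<in> Hom T X" "k' \<cdot> h = pa \<cdot> t"
        using ker_pair[OF H'(11), of "pa \<cdot> t" T] t PH by auto
      have kh: "kk \<cdot> h = t"
      proof (rule pb_uniq[OF Pb, of _ T])
        show "kk \<cdot> h \<in> Hom T Pb" "t \<in> Hom T Pb" using kk h t by auto
        have "pa \<cdot> (kk \<cdot> h) = k' \<cdot> h" by (rule eq_lift[OF kk(2)]) (use kk h PH in simp_all)
        then show "pa \<cdot> kk \<cdot> h = pa \<cdot> t" using h by simp
        have "pb \<cdot> (kk \<cdot> h) = Z0 X B \<cdot> h" by (rule eq_lift[OF kk(3)]) (use kk h PH in simp_all)
        then show "pb \<cdot> kk \<cdot> h = pb \<cdot> t" using h t H by simp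
      qed
      show "\<exists>!h. h \<in> Hom T X \<and> kk \<cdot> h = t"
      proof (rule ex1I[of _ h])
        show "h \<in> Hom T X \<and> kk \<cdot> h = t" using h kh by simp
        fix h2 assume h2: "h2 \<in> Hom T X \<and> kk \<cdot> h2 = t"
        have "pa \<cdot> (kk \<cdot> h2) = k' \<cdot> h2" by (rule eq_lift[OF kk(2)]) (use kk h2 PH in simp_all)
        then have "k' \<cdot> h2 = k' \<cdot> h" using h h2 by simp
        then show "h2 = h" using ker_uniq[OF H'(11), of h2 T h] h h2 by simp
      qed
    qed
  qed
  obtain hc where hc: "hc \<in> Hom A Pb" "pa \<cdot> hc = f" "pb \<cdot> hc = a"
    using pb_pair[OF Pb, of f A a] f H af by auto
  have hck: "hc \<cdot> k = kk"
  proof (rule pb_uniq[OF Pb, of _ X])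
    show "hc \<cdot> k \<in> Hom X Pb" "kk \<in> Hom X Pb" using hc kk H by auto
    have "pa \<cdot> (hc \<cdot> k) = f \<cdot> k" by (rule eq_lift[OF hc(2)]) (use hc H PH in simp_all)
    then show "pa \<cdot> hc \<cdot> k = pa \<cdot> kk" using fk kk by simp
    have "pb \<cdot> (hc \<cdot> k) = a \<cdot> k" by (rule eq_lift[OF hc(3)]) (use hc H PH in simp_all)
    then show "pb \<cdot> hc \<cdot> k = pb \<cdot> kk" using KH kk by simp
  qed
  have hcb: "hc \<cdot> b = s"
  proof (rule pb_uniq[OF Pb, of _ B])
    show "hc \<cdot> b \<in> Hom B Pb" "s \<in> Hom B Pb" using hc s H by auto
    have "pa \<cdot> (hc \<cdot> b) = f \<cdot> b" by (rule eq_lift[OF hc(2)]) (use hc H PH in simp_all)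
    then show "pa \<cdot> hc \<cdot> b = pa \<cdot> s" using fb s by simp
    have "pb \<cdot> (hc \<cdot> b) = a \<cdot> b" by (rule eq_lift[OF hc(3)]) (use hc H PH in simp_all)
    then show "pb \<cdot> hc \<cdot> b = pb \<cdot> s" using H s by simp
  qed
  obtain hi where hi: "hi \<in> Hom Pb A" "hi \<cdot> hc = idm A" "hc \<cdot> hi = idm Pb"
    using ssf[OF E SE hc(1) hck hc(3) hcb] by blast
  show ?thesis unfolding is_pullback_def
  proof (intro conjI allI impI)
    show "a' \<in> Hom A' B'" "g \<in> Hom B B'" "f \<in> Hom A A'" "a \<in> Hom A B" "a' \<cdot> f = g \<cdot> a"
      using H' g f H af by auto
    fix T x y assume x: "x \<in> Hom T A'" and y: "y \<in> Hom T B" and xy: "a' \<cdot> x = g \<cdot> y"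
    obtain z where z: "z \<in> Hom T Pb" "pa \<cdot> z = x" "pb \<cdot> z = y" using pb_pair[OF Pb x y xy] by blast
    have hiz: "hc \<cdot> (hi \<cdot> z) = z" using hi z hc by (simp flip: assoc)
    show "\<exists>!h. h \<in> Hom T A \<and> f \<cdot> h = x \<and> a \<cdot> h = y"
    proof (rule ex1I[of _ "hi \<cdot> z"])
      have "f \<cdot> (hi \<cdot> z) = pa \<cdot> (hc \<cdot> (hi \<cdot> z))" by (rule eq_lift[OF hc(2), symmetric]) (use hc hi z PH in simp_all)
      moreover have "a \<cdot> (hi \<cdot> z) = pb \<cdot> (hc \<cdot> (hi \<cdot> z))" by (rule eq_lift[OF hc(3), symmetric]) (use hc hi z PH in simp_all)
      ultimately show "hi \<cdot> z \<in> Hom T A \<and> f \<cdot> hi \<cdot> z = x \<and> a \<cdot> hi \<cdot> z = y"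
        using hiz z hi by simp
      fix h assume h: "h \<in> Hom T A \<and> f \<cdot> h = x \<and> a \<cdot> h = y"
      have "hc \<cdot> h = z"
      proof (rule pb_uniq[OF Pb, of _ T])
        show "hc \<cdot> h \<in> Hom T Pb" "z \<in> Hom T Pb" using h hc z by auto
        have "pa \<cdot> (hc \<cdot> h) = f \<cdot> h" by (rule eq_lift[OF hc(2)]) (use hc h PH in simp_all)
        then show "pa \<cdot> hc \<cdot> h = pa \<cdot> z" using h z by simp
        have "pb \<cdot> (hc \<cdot> h) = a \<cdot> h" by (rule eq_lift[OF hc(3)]) (use hc h PH in simp_all)
        then show "pb \<cdot> hc \<cdot> h = pb \<cdot> z" using h z by simp
      qed
      then have "hi \<cdot> (hc \<cdot> h) = hi \<cdot> z" by simp
      moreover have "hi \<cdot> (hc \<cdot> h) = idm A \<cdot> h" by (rule eq_lift[OF hi(2)]) (use hc h hi in simp_all)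
      ultimately show "h = hi \<cdot> z" using h by simp
    qed
  qed
qed


lemma lift: "x \<cdot> y = z \<Longrightarrow> arr x \<Longrightarrow> arr y \<Longrightarrow> dm x = cd y \<Longrightarrow> arr w \<Longrightarrow> cd w = dm y \<Longrightarrow>
   x \<cdot> (y \<cdot> w) = z \<cdot> w"
  by (simp flip: assoc)

lemma euclid: assumes r1: "r1 \<in> Hom R Y" and r2: "r2 \<in> Hom R Y"
  and jm: "\<forall>T a b. a \<in> Hom T R \<longrightarrow> b \<in> Hom T R \<longrightarrow> r1 \<cdot> a = r1 \<cdot> b \<longrightarrow> r2 \<cdot> a = r2 \<cdot> b \<longrightarrow> a = b"
  and dl: "dl \<in> Hom Y R" "r1 \<cdot> dl = idm Y" "r2 \<cdot> dl = idm Y"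
  and t: "t1 \<in> Hom W R" "t2 \<in> Hom W R" "r1 \<cdot> t1 = r1 \<cdot> t2"
  shows "\<exists>t. t \<in> Hom W R \<and> r1 \<cdot> t = r2 \<cdot> t1 \<and> r2 \<cdot> t = r2 \<cdot> t2"
proof -
  have YO: "Y \<in> Ob" and RO: "R \<in> Ob" using r1 by auto
  obtain Q qa qb where Q: "is_pullback C R R Y r1 r1 Q qa qb" using pb_ex[OF r1 r1] by blast
  note QH = pb_homs[OF Q]
  obtain s where s: "s \<in> Hom R Q" "qa \<cdot> s = idm R" "qb \<cdot> s = idm R"
    using pb_pair[OF Q, of "idm R" R "idm R"] RO r1 by auto
  obtain K kp where K: "is_kernel C K Q R kp qa" using ker_ex[of qa Q R] QH by auto
  note KH = ker_homs[OF K]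
  have SE: "split_ext C K Q R kp qa s" unfolding split_ext_def using K KH QH s by auto
  obtain YY y1 y2 where YY: "is_product C Y Y YY y1 y2" using prod_ex[OF YO YO] by blast
  note YH = prod_homs[OF YY]
  obtain rho where rho: "rho \<in> Hom R YY" "y1 \<cdot> rho = r1" "y2 \<cdot> rho = r2"
    using prod_pair[OF YY r1 r2] by blast
  obtain sg where sg: "sg \<in> Hom Q YY" "y1 \<cdot> sg = r2 \<cdot> qa" "y2 \<cdot> sg = r2 \<cdot> qb"
    using prod_pair[OF YY, of "r2 \<cdot> qa" Q "r2 \<cdot> qb"] r2 QH by auto
  obtain M mw m where M: "is_pullback C R Q YY rho sg M mw m" using pb_ex[OF rho(1) sg(1)] by blast
  note MH = pb_homs[OF M]
  note L = lift[OF rho(2)] lift[OF rho(3)] lift[OF sg(2)] lift[OF sg(3)] lift[OF dl(2)] lift[OF dl(3)]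
    lift[OF s(2)] lift[OF s(3)] lift[OF QH(13)]
    rho(2,3) sg(2,3) dl(2,3) s(2,3) KH(7)
  note LM = lift[OF MH(13)] lift[OF KH(7)]
  note HS = r1 r2 dl(1) QH KH YH MH s(1) rho(1) sg(1)
  have mmono: "is_mono C m"
  proof (rule monoI[of _ M Q])
    fix T x x' assume xx: "x \<in> Hom T M" "x' \<in> Hom T M" "m \<cdot> x = m \<cdot> x'"
    have e1: "rho \<cdot> (mw \<cdot> x) = rho \<cdot> (mw \<cdot> x')" using xx HS LM by simp
    have "r1 \<cdot> (mw \<cdot> x) = y1 \<cdot> (rho \<cdot> (mw \<cdot> x))" using xx HS L by simp
    also have "\<dots> = r1 \<cdot> (mw \<cdot> x')" using e1 xx HS L by simp
    finally have e2: "r1 \<cdot> (mw \<cdot> x) = r1 \<cdot> (mw \<cdot> x')" .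
    have "r2 \<cdot> (mw \<cdot> x) = y2 \<cdot> (rho \<cdot> (mw \<cdot> x))" using xx HS L by simp
    also have "\<dots> = r2 \<cdot> (mw \<cdot> x')" using e1 xx HS L by simp
    finally have e3: "r2 \<cdot> (mw \<cdot> x) = r2 \<cdot> (mw \<cdot> x')" .
    have "mw \<cdot> x = mw \<cdot> x'" by (rule jm[rule_format, OF _ _ e2 e3]) (use xx HS in auto)
    then show "x = x'" using pb_uniq[OF M xx(1,2)] xx by simp
  qed (use MH in auto)
  have "rho \<cdot> (dl \<cdot> r2) = sg \<cdot> s"
    by (rule prod_uniq[OF YY, of _ R]) (use HS L in simp_all)
  then obtain s' where s': "s' \<in> Hom R M" "mw \<cdot> s' = dl \<cdot> r2" "m \<cdot> s' = s"
    using pb_pair[OF M, of "dl \<cdot> r2" R s] HS by auto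
  have "rho \<cdot> (qb \<cdot> kp) = sg \<cdot> kp"
  proof (rule prod_uniq[OF YY, of _ K])
    have "r1 \<cdot> (qb \<cdot> kp) = r1 \<cdot> (qa \<cdot> kp)" by (rule eq_lift2[OF QH(13), symmetric]) (use HS in simp_all)
    also have "\<dots> = Z0 K Y" using HS L by simp
    finally have "r1 \<cdot> (qb \<cdot> kp) = Z0 K Y" .
    then show "y1 \<cdot> rho \<cdot> qb \<cdot> kp = y1 \<cdot> sg \<cdot> kp" using HS L by simp
  qed (use HS L in simp_all)
  then obtain k' where k': "k' \<in> Hom K M" "mw \<cdot> k' = qb \<cdot> kp" "m \<cdot> k' = kp"
    using pb_pair[OF M, of "qb \<cdot> kp" K kp] HS by auto
  obtain g where g: "g \<in> Hom Q M" "m \<cdot> g = idm Q"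
    using cover[OF SE _ mmono k'(1,3) s'(1,3)] HS by auto
  obtain q where q: "q \<in> Hom W Q" "qa \<cdot> q = t1" "qb \<cdot> q = t2" using pb_pair[OF Q t] by blast
  have mgq: "m \<cdot> (g \<cdot> q) = q" using lift[OF g(2)] g q HS by simp
  show ?thesis
  proof (intro exI conjI)
    show "mw \<cdot> (g \<cdot> q) \<in> Hom W R" using g q HS by simp
    have "r1 \<cdot> (mw \<cdot> (g \<cdot> q)) = y1 \<cdot> (rho \<cdot> (mw \<cdot> (g \<cdot> q)))" using g q HS L by simp
    also have "\<dots> = y1 \<cdot> (sg \<cdot> (m \<cdot> (g \<cdot> q)))" using g q HS LM by simp
    finally have "r1 \<cdot> (mw \<cdot> (g \<cdot> q)) = y1 \<cdot> (sg \<cdot> (m \<cdot> (g \<cdot> q)))" .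
    then show "r1 \<cdot> (mw \<cdot> (g \<cdot> q)) = r2 \<cdot> t1" using mgq g q HS L by simp
    have "r2 \<cdot> (mw \<cdot> (g \<cdot> q)) = y2 \<cdot> (rho \<cdot> (mw \<cdot> (g \<cdot> q)))" using g q HS L by simp
    also have "\<dots> = y2 \<cdot> (sg \<cdot> (m \<cdot> (g \<cdot> q)))" using g q HS LM by simp
    finally have "r2 \<cdot> (mw \<cdot> (g \<cdot> q)) = y2 \<cdot> (sg \<cdot> (m \<cdot> (g \<cdot> q)))" .
    then show "r2 \<cdot> (mw \<cdot> (g \<cdot> q)) = r2 \<cdot> t2" using mgq g q HS L by simp
  qed
qed


lemma equiv_from_refl: assumes r1: "r1 \<in> Hom R Y" and r2: "r2 \<in> Hom R Y"
  and jm: "\<forall>T a b. a \<in> Hom T R \<longrightarrow> b \<in> Hom T R \<longrightarrow> r1 \<cdot> a = r1 \<cdot> b \<longrightarrow> r2 \<cdot> a = r2 \<cdot> b \<longrightarrow> a = b"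
  and dl: "dl \<in> Hom Y R" "r1 \<cdot> dl = idm Y" "r2 \<cdot> dl = idm Y"
  shows "is_equiv_rel C Y R r1 r2"
proof -
  note L = lift[OF dl(2)] lift[OF dl(3)] dl(2,3)
  have sym: "\<exists>t'\<in>Hom T R. r1 \<cdot> t' = r2 \<cdot> t \<and> r2 \<cdot> t' = r1 \<cdot> t" if t: "t \<in> Hom T R" for T t
  proof -
    have e: "r1 \<cdot> t = r1 \<cdot> (dl \<cdot> (r1 \<cdot> t))" using t r1 dl L by simp
    have "dl \<cdot> (r1 \<cdot> t) \<in> Hom T R" using t r1 dl by simp
    then obtain t' where t': "t' \<in> Hom T R" "r1 \<cdot> t' = r2 \<cdot> t" "r2 \<cdot> t' = r2 \<cdot> (dl \<cdot> (r1 \<cdot> t))"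
      using euclid[OF r1 r2 jm dl t _ e] by blast
    have "r2 \<cdot> (dl \<cdot> (r1 \<cdot> t)) = r1 \<cdot> t" using t r1 r2 dl L by simp
    then show ?thesis using t' by auto
  qed
  have refl: "\<forall>x\<in>Hom T Y. \<exists>t\<in>Hom T R. r1 \<cdot> t = x \<and> r2 \<cdot> t = x" for T
  proof
    fix x assume x: "x \<in> Hom T Y"
    show "\<exists>t\<in>Hom T R. r1 \<cdot> t = x \<and> r2 \<cdot> t = x"
      by (rule bexI[of _ "dl \<cdot> x"]) (use x r1 r2 dl L in simp_all)
  qed
  have sym': "\<forall>x y. (\<exists>t\<in>Hom T R. r1 \<cdot> t = x \<and> r2 \<cdot> t = y) \<longrightarrow> (\<exists>t\<in>Hom T R. r1 \<cdot> t = y \<and> r2 \<cdot> t = x)" for T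
    using sym by blast
  have trans': "\<forall>x y z. (\<exists>t\<in>Hom T R. r1 \<cdot> t = x \<and> r2 \<cdot> t = y) \<longrightarrow> (\<exists>t\<in>Hom T R. r1 \<cdot> t = y \<and> r2 \<cdot> t = z)
       \<longrightarrow> (\<exists>t\<in>Hom T R. r1 \<cdot> t = x \<and> r2 \<cdot> t = z)" for T
  proof (intro allI impI)
      fix x y z assume "\<exists>t\<in>Hom T R. r1 \<cdot> t = x \<and> r2 \<cdot> t = y" "\<exists>t\<in>Hom T R. r1 \<cdot> t = y \<and> r2 \<cdot> t = z"
      then obtain t1 t2 where t1: "t1 \<in> Hom T R" "r1 \<cdot> t1 = x" "r2 \<cdot> t1 = y"
        and t2: "t2 \<in> Hom T R" "r1 \<cdot> t2 = y" "r2 \<cdot> t2 = z" by blast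
      obtain t1' where t1': "t1' \<in> Hom T R" "r1 \<cdot> t1' = y" "r2 \<cdot> t1' = x" using sym[OF t1(1)] t1 by auto
      have "r1 \<cdot> t1' = r1 \<cdot> t2" using t1' t2 by simp
      then show "\<exists>t\<in>Hom T R. r1 \<cdot> t = x \<and> r2 \<cdot> t = z"
        using euclid[OF r1 r2 jm dl t1'(1) t2(1)] t1' t2 by auto
  qed
  show ?thesis unfolding is_equiv_rel_def Let_def
    using r1 r2 jm refl sym' trans' by blast
qed

lemma lift3: "x \<cdot> (y \<cdot> z) = r \<Longrightarrow> arr x \<Longrightarrow> arr y \<Longrightarrow> arr z \<Longrightarrow> dm x = cd y \<Longrightarrow> dm y = cd z \<Longrightarrow>
   arr w \<Longrightarrow> cd w = dm z \<Longrightarrow> x \<cdot> (y \<cdot> (z \<cdot> w)) = r \<cdot> w"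
  by (simp flip: assoc)

lemma mor_comp: assumes E: "split_ext C X A B k a b" and E': "split_ext C X A' B' k' a' b'"
  and E'': "split_ext C X A'' B'' k'' a'' b''"
  and M: "split_ext_mor C A B k a b A' B' k' a' b' f g"
  and M': "split_ext_mor C A' B' k' a' b' A'' B'' k'' a'' b'' f' g'"
  shows "split_ext_mor C A B k a b A'' B'' k'' a'' b'' (f' \<cdot> f) (g' \<cdot> g)"
proof -
  note H = se_homs[OF E] and H' = se_homs[OF E'] and H'' = se_homs[OF E'']
  have m: "f \<in> Hom A A'" "g \<in> Hom B B'" "f \<cdot> k = k'" "a' \<cdot> f = g \<cdot> a" "f \<cdot> b = b' \<cdot> g"
    using M unfolding split_ext_mor_def by auto
  have m': "f' \<in> Hom A' A''" "g' \<in> Hom B' B''" "f' \<cdot> k' = k''" "a'' \<cdot> f' = g' \<cdot> a'" "f' \<cdot> b' = b'' \<cdot> g'"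
    using M' unfolding split_ext_mor_def by auto
  note L = m(3-5) m'(3-5) lift[OF m(3)] lift[OF m(4)] lift[OF m(5)] lift[OF m'(3)] lift[OF m'(4)] lift[OF m'(5)]
  show ?thesis unfolding split_ext_mor_def
    using m(1,2) m'(1,2) H H' H'' L by simp
qed

end


context pcat begin
lemma mor_id: assumes "split_ext C X A B ka a b" shows "split_ext_mor C A B ka a b A B ka a b (idm A) (idm B)"
  using se_homs[OF assms] unfolding split_ext_mor_def by simp
end

locale gen = pcat +
  fixes X G T k p1 i c P q1 q2 d e f
  assumes gen: "is_generic_split_ext C X G T k p1 i"
  and conjP: "is_product C X X P q1 q2"
  and d: "d \<in> hom C X P" "cmp C q1 d = zero C X X" "cmp C q2 d = cid C X"
  and e: "e \<in> hom C X P" "cmp C q1 e = cid C X" "cmp C q2 e = cid C X"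
  and fc: "split_ext_mor C P X d q1 e G T k p1 i f c"
begin

lemma G1: "split_ext C X G T k p1 i" using gen unfolding is_generic_split_ext_def by blast
lemma fcH: "f \<in> Hom P G" "c \<in> Hom X T" "f \<cdot> d = k" "p1 \<cdot> f = c \<cdot> q1" "f \<cdot> e = i \<cdot> c"
  using fc unfolding split_ext_mor_def by auto
lemma G2: "split_ext C X P X d q1 e"
  unfolding split_ext_def using prod_ker[OF conjP d] d e prod_homs[OF conjP] by auto

lemma gen_uniq: assumes "split_ext C X A B ka a b"
  "split_ext_mor C A B ka a b G T k p1 i f1 g1" "split_ext_mor C A B ka a b G T k p1 i f2 g2"
  shows "f1 = f2 \<and> g1 = g2"
proof -
  obtain f0 g0 where "\<forall>f' g'. split_ext_mor C A B ka a b G T k p1 i f' g' \<longrightarrow> f' = f0 \<and> g' = g0"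
    using gen assms(1) unfolding is_generic_split_ext_def by blast
  then show ?thesis using assms(2,3) by blast
qed

lemma conj_uniq: "split_ext_mor C P X d q1 e G T k p1 i f' g' \<Longrightarrow> g' = c"
  using gen_uniq[OF G2 _ fc] by blast

lemma c_pb: "is_pullback C G X T p1 c P f q1" by (rule mor_pb[OF G2 G1 fc])


lemma c_mono: assumes tc: "trivial_center C X" shows "is_mono C c"
proof (rule kernel_mono)
  note G1H = se_homs[OF G1] and G2H = se_homs[OF G2] and PH = prod_homs[OF conjP]
  note FH = fcH and KG = ker_homs[OF se_homs(11)[OF G1]]
  show "c \<in> Hom X T" using fcH by simp
  fix W t assume t: "t \<in> Hom W X" "c \<cdot> t = Z0 W T"
  have WO: "W \<in> Ob" and XO: "X \<in> Ob" and TO: "T \<in> Ob" using t G1H by auto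
  obtain PW r1 r2 where PW: "is_product C W X PW r1 r2" using prod_ex[OF WO XO] by blast
  note WH = prod_homs[OF PW]
  obtain d1 where d1: "d1 \<in> Hom X PW" "r1 \<cdot> d1 = Z0 X W" "r2 \<cdot> d1 = idm X"
    using prod_pair[OF PW, of "Z0 X W" X "idm X"] WO XO by auto
  obtain s1 where s1: "s1 \<in> Hom W PW" "r1 \<cdot> s1 = idm W" "r2 \<cdot> s1 = t"
    using prod_pair[OF PW, of "idm W" W t] WO t by auto
  have E1: "split_ext C X PW W d1 r1 s1"
    unfolding split_ext_def using prod_ker[OF PW d1] d1 s1 WH by auto
  obtain h1 where h1: "h1 \<in> Hom PW P" "q1 \<cdot> h1 = t \<cdot> r1" "q2 \<cdot> h1 = r2"
    using prod_pair[OF conjP, of "t \<cdot> r1" PW r2] t WH by auto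
  note L = d1(2,3) s1(2,3) h1(2,3) d(2,3) e(2,3) FH(3-5) t(2)
    lift[OF d1(2)] lift[OF d1(3)] lift[OF s1(2)] lift[OF s1(3)] lift[OF h1(2)] lift[OF h1(3)]
    lift[OF d(2)] lift[OF d(3)] lift[OF e(2)] lift[OF e(3)] lift[OF FH(3)] lift[OF FH(4)] lift[OF FH(5)]
    lift[OF t(2)] KG(7) lift[OF KG(7)]
  note HS = t(1) d1(1) s1(1) h1(1) d(1) e(1) FH(1,2) G1H G2H PH WH WO XO TO KG(1-6)
  have h1d1: "h1 \<cdot> d1 = d"
    by (rule prod_uniq[OF conjP, of _ X]) (use HS L in simp_all)
  have h1s1: "h1 \<cdot> s1 = e \<cdot> t"
    by (rule prod_uniq[OF conjP, of _ W]) (use HS L in simp_all)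
  have M1: "split_ext_mor C PW W d1 r1 s1 P X d q1 e h1 t"
    unfolding split_ext_mor_def using HS h1d1 h1s1 L by simp
  have M2: "split_ext_mor C PW W d1 r1 s1 G T k p1 i (f \<cdot> h1) (c \<cdot> t)"
    by (rule mor_comp[OF E1 G2 G1 M1 fc])
  have PB: "is_pullback C G W T p1 (c \<cdot> t) PW (f \<cdot> h1) r1" by (rule mor_pb[OF E1 G1 M2])
  have "p1 \<cdot> (k \<cdot> r2) = (c \<cdot> t) \<cdot> r1" using HS L ker_homs[OF G1H(11)] by simp
  then obtain th where th: "th \<in> Hom PW PW" "(f \<cdot> h1) \<cdot> th = k \<cdot> r2" "r1 \<cdot> th = r1"
    using pb_pair[OF PB, of "k \<cdot> r2" PW r1] HS by auto
  have th2: "f \<cdot> (h1 \<cdot> th) = k \<cdot> r2" using th HS by simp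
  note L2 = th2 th(3) lift3[OF th2] lift[OF th(3)]
  have "commutes_with_id C X W t" unfolding commutes_with_id_def
  proof (intro conjI exI)
    show "t \<in> Hom W X" "is_product C W X PW r1 r2" "r2 \<cdot> th \<in> Hom PW X" using t PW th WH by auto
    show "\<forall>m. m \<in> Hom W PW \<longrightarrow> r1 \<cdot> m = idm W \<longrightarrow> r2 \<cdot> m = Z0 W X \<longrightarrow> (r2 \<cdot> th) \<cdot> m = t"
    proof (intro allI impI)
      fix m assume m: "m \<in> Hom W PW" "r1 \<cdot> m = idm W" "r2 \<cdot> m = Z0 W X"
      have a1: "f \<cdot> (h1 \<cdot> (th \<cdot> m)) = (k \<cdot> r2) \<cdot> m" by (rule lift3[OF th2]) (use m th HS in simp_all)
      also have "\<dots> = Z0 W G" using m HS by simp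
      finally have a1: "f \<cdot> (h1 \<cdot> (th \<cdot> m)) = Z0 W G" .
      have "f \<cdot> (h1 \<cdot> s1) = f \<cdot> (e \<cdot> t)" using h1s1 by simp
      also have "\<dots> = (i \<cdot> c) \<cdot> t" by (rule lift[OF FH(5)]) (use HS in simp_all)
      also have "\<dots> = Z0 W G" using HS t by simp
      finally have a2: "f \<cdot> (h1 \<cdot> s1) = Z0 W G" .
      have a3: "r1 \<cdot> (th \<cdot> m) = idm W" using lift[OF th(3), of m] m th HS by simp
      have "th \<cdot> m = s1"
        by (rule pb_uniq[OF PB, of _ W]) (use m th HS a1 a2 a3 s1 in simp_all)
      then show "(r2 \<cdot> th) \<cdot> m = t" using m th HS L by simp
    qed
    show "\<forall>m. m \<in> Hom X PW \<longrightarrow> r1 \<cdot> m = Z0 X W \<longrightarrow> r2 \<cdot> m = idm X \<longrightarrow> (r2 \<cdot> th) \<cdot> m = idm X"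
    proof (intro allI impI)
      fix m assume m: "m \<in> Hom X PW" "r1 \<cdot> m = Z0 X W" "r2 \<cdot> m = idm X"
      have md: "m = d1" by (rule prod_uniq[OF PW, of _ X]) (use m d1 in simp_all)
      have "f \<cdot> (h1 \<cdot> (th \<cdot> m)) = (k \<cdot> r2) \<cdot> m" by (rule lift3[OF th2]) (use m th HS in simp_all)
      also have "\<dots> = k" using m HS by simp
      finally have a1: "f \<cdot> (h1 \<cdot> (th \<cdot> m)) = k" .
      have a2: "f \<cdot> (h1 \<cdot> m) = k" using md h1d1 FH by simp
      have a3: "r1 \<cdot> (th \<cdot> m) = r1 \<cdot> m" using lift[OF th(3), of m] m th HS by simp
      have "th \<cdot> m = m"
        by (rule pb_uniq[OF PB, of _ X]) (use m th HS a1 a2 a3 in simp_all)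
      then show "(r2 \<cdot> th) \<cdot> m = idm X" using m th HS by simp
    qed
  qed
  moreover obtain Z z where Z: "is_center C X Z z" "is_zero_obj C Z"
    using tc unfolding trivial_center_def by blast
  ultimately obtain h where h: "h \<in> Hom W Z" "z \<cdot> h = t"
    unfolding is_center_def by blast
  have "z \<in> Hom Z X" using Z unfolding is_center_def commutes_with_id_def by blast
  then show "t = Z0 W X" using zero_factor[OF Z(2) h(1)] h by simp
qed


lemma q_ex: "\<exists>q. q \<in> Hom G T \<and> q \<cdot> i = idm T \<and> q \<cdot> k = c"
proof -
  note G1H = se_homs[OF G1] and G2H = se_homs[OF G2] and PH = prod_homs[OF conjP]
  note FH = fcH and KG = ker_homs[OF se_homs(11)[OF G1]]
  obtain E e1 e2 where EP: "is_pullback C G G T p1 p1 E e1 e2" using pb_ex[of p1 G T p1 G] G1H by auto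
  note EH = pb_homs[OF EP]
  obtain dl where dl: "dl \<in> Hom G E" "e1 \<cdot> dl = idm G" "e2 \<cdot> dl = idm G"
    using pb_pair[OF EP, of "idm G" G "idm G"] G1H by auto
  have "p1 \<cdot> Z0 X G = p1 \<cdot> k" using KG G1H by simp
  then obtain kE where kE: "kE \<in> Hom X E" "e1 \<cdot> kE = Z0 X G" "e2 \<cdot> kE = k"
    using pb_pair[OF EP, of "Z0 X G" X k] G1H by auto
  have SE: "split_ext C X E G kE e1 dl" unfolding split_ext_def
  proof (intro conjI)
    show "kE \<in> Hom X E" "e1 \<in> Hom E G" "dl \<in> Hom G E" "e1 \<cdot> dl = idm G" using kE dl EH by auto
    show "is_kernel C X E G kE e1" unfolding is_kernel_def
    proof (intro conjI allI impI)
      show "kE \<in> Hom X E" "e1 \<in> Hom E G" "e1 \<cdot> kE = Z0 X G" using kE EH by auto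
      fix W t assume t: "t \<in> Hom W E" "e1 \<cdot> t = Z0 W G"
      have "p1 \<cdot> (e2 \<cdot> t) = p1 \<cdot> (e1 \<cdot> t)" by (rule eq_lift2[OF EH(13), symmetric]) (use t EH in simp_all)
      also have "\<dots> = Z0 W T" using t G1H arr_ob[of t] by simp
      finally obtain h where h: "h \<in> Hom W X" "k \<cdot> h = e2 \<cdot> t"
        using ker_pair[OF G1H(11), of "e2 \<cdot> t" W] t EH by auto
      have a1: "e1 \<cdot> (kE \<cdot> h) = Z0 W G" using lift[OF kE(2), of h] h kE EH G1H by simp
      have a2: "e2 \<cdot> (kE \<cdot> h) = k \<cdot> h" using lift[OF kE(3), of h] h kE EH G1H by simp
      have kh: "kE \<cdot> h = t" by (rule pb_uniq[OF EP, of _ W]) (use a1 a2 h t kE in simp_all)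
      show "\<exists>!h. h \<in> Hom W X \<and> kE \<cdot> h = t"
      proof (rule ex1I[of _ h])
        show "h \<in> Hom W X \<and> kE \<cdot> h = t" using h kh by simp
        fix h2 assume h2: "h2 \<in> Hom W X \<and> kE \<cdot> h2 = t"
        have "e2 \<cdot> (kE \<cdot> h2) = k \<cdot> h2" using lift[OF kE(3), of h2] h2 kE EH G1H by simp
        then have "k \<cdot> h2 = k \<cdot> h" using h h2 by simp
        then show "h2 = h" using ker_uniq[OF G1H(11), of h2 W h] h h2 by simp
      qed
    qed
  qed
  obtain F q where Fq: "split_ext_mor C E G kE e1 dl G T k p1 i F q"
    using gen SE unfolding is_generic_split_ext_def by blast
  have "p1 \<cdot> (i \<cdot> p1) = p1 \<cdot> idm G" using lift[OF G1H(10), of p1] G1H by simp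
  then obtain j1 where j1: "j1 \<in> Hom G E" "e1 \<cdot> j1 = i \<cdot> p1" "e2 \<cdot> j1 = idm G"
    using pb_pair[OF EP, of "i \<cdot> p1" G "idm G"] G1H by auto
  have j1k: "j1 \<cdot> k = kE"
  proof (rule pb_uniq[OF EP, of _ X])
    have "e1 \<cdot> (j1 \<cdot> k) = (i \<cdot> p1) \<cdot> k" using lift[OF j1(2), of k] j1 EH G1H by simp
    then show "e1 \<cdot> j1 \<cdot> k = e1 \<cdot> kE" using kE G1H KG by simp
    have "e2 \<cdot> (j1 \<cdot> k) = idm G \<cdot> k" using lift[OF j1(3), of k] j1 EH G1H by simp
    then show "e2 \<cdot> j1 \<cdot> k = e2 \<cdot> kE" using kE G1H by simp
  qed (use j1 kE G1H in auto)
  have j1i: "j1 \<cdot> i = dl \<cdot> i"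
  proof (rule pb_uniq[OF EP, of _ T])
    have "e1 \<cdot> (j1 \<cdot> i) = (i \<cdot> p1) \<cdot> i" using lift[OF j1(2), of i] j1 EH G1H by simp
    moreover have "e1 \<cdot> (dl \<cdot> i) = idm G \<cdot> i" using lift[OF dl(2), of i] dl EH G1H by simp
    ultimately show "e1 \<cdot> j1 \<cdot> i = e1 \<cdot> dl \<cdot> i" using G1H by simp
    have "e2 \<cdot> (j1 \<cdot> i) = idm G \<cdot> i" using lift[OF j1(3), of i] j1 EH G1H by simp
    moreover have "e2 \<cdot> (dl \<cdot> i) = idm G \<cdot> i" using lift[OF dl(3), of i] dl EH G1H by simp
    ultimately show "e2 \<cdot> j1 \<cdot> i = e2 \<cdot> dl \<cdot> i" by simp
  qed (use j1 dl G1H in auto)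
  have M1: "split_ext_mor C G T k p1 i E G kE e1 dl j1 i"
    unfolding split_ext_mor_def using j1 j1k j1i G1H by simp
  have "split_ext_mor C G T k p1 i G T k p1 i (F \<cdot> j1) (q \<cdot> i)" by (rule mor_comp[OF G1 SE G1 M1 Fq])
  then have qi: "q \<cdot> i = idm T" using gen_uniq[OF G1 _ mor_id[OF G1]] by blast
  have "p1 \<cdot> (k \<cdot> q1) = p1 \<cdot> (k \<cdot> q2)" using lift[OF KG(7)] KG PH G1H by simp
  then obtain j2 where j2: "j2 \<in> Hom P E" "e1 \<cdot> j2 = k \<cdot> q1" "e2 \<cdot> j2 = k \<cdot> q2"
    using pb_pair[OF EP, of "k \<cdot> q1" P "k \<cdot> q2"] KG PH by auto
  have j2d: "j2 \<cdot> d = kE"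
  proof (rule pb_uniq[OF EP, of _ X])
    have "e1 \<cdot> (j2 \<cdot> d) = (k \<cdot> q1) \<cdot> d" using lift[OF j2(2), of d] j2 EH d by simp
    then show "e1 \<cdot> j2 \<cdot> d = e1 \<cdot> kE" using kE d KG PH lift[OF d(2)] G1H by simp
    have "e2 \<cdot> (j2 \<cdot> d) = (k \<cdot> q2) \<cdot> d" using lift[OF j2(3), of d] j2 EH d by simp
    then show "e2 \<cdot> j2 \<cdot> d = e2 \<cdot> kE" using kE d KG PH lift[OF d(3)] by simp
  qed (use j2 kE d in auto)
  have j2e: "j2 \<cdot> e = dl \<cdot> k"
  proof (rule pb_uniq[OF EP, of _ X])
    have "e1 \<cdot> (j2 \<cdot> e) = (k \<cdot> q1) \<cdot> e" using lift[OF j2(2), of e] j2 EH e by simp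
    moreover have "e1 \<cdot> (dl \<cdot> k) = idm G \<cdot> k" using lift[OF dl(2), of k] dl EH KG by simp
    ultimately show "e1 \<cdot> j2 \<cdot> e = e1 \<cdot> dl \<cdot> k" using e KG PH lift[OF e(2)] by simp
    have "e2 \<cdot> (j2 \<cdot> e) = (k \<cdot> q2) \<cdot> e" using lift[OF j2(3), of e] j2 EH e by simp
    moreover have "e2 \<cdot> (dl \<cdot> k) = idm G \<cdot> k" using lift[OF dl(3), of k] dl EH KG by simp
    ultimately show "e2 \<cdot> j2 \<cdot> e = e2 \<cdot> dl \<cdot> k" using e KG PH lift[OF e(3)] by simp
  qed (use j2 dl e KG in auto)
  have M2: "split_ext_mor C P X d q1 e E G kE e1 dl j2 k"
    unfolding split_ext_mor_def using j2 j2d j2e KG by simp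
  have "split_ext_mor C P X d q1 e G T k p1 i (F \<cdot> j2) (q \<cdot> k)" by (rule mor_comp[OF G2 SE G1 M2 Fq])
  then have qk: "q \<cdot> k = c" using conj_uniq by blast
  have "q \<in> Hom G T" using Fq unfolding split_ext_mor_def by blast
  then show ?thesis using qi qk by blast
qed

end


context pcat begin

lemma eqr_D: assumes "is_equiv_rel C Y R r1 r2"
  shows "r1 \<in> Hom R Y" "r2 \<in> Hom R Y"
    "\<And>W a b. a \<in> Hom W R \<Longrightarrow> b \<in> Hom W R \<Longrightarrow> r1 \<cdot> a = r1 \<cdot> b \<Longrightarrow> r2 \<cdot> a = r2 \<cdot> b \<Longrightarrow> a = b"
    "\<And>W x. x \<in> Hom W Y \<Longrightarrow> \<exists>t. t \<in> Hom W R \<and> r1 \<cdot> t = x \<and> r2 \<cdot> t = x"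
    "\<And>W t. t \<in> Hom W R \<Longrightarrow> \<exists>t'. t' \<in> Hom W R \<and> r1 \<cdot> t' = r2 \<cdot> t \<and> r2 \<cdot> t' = r1 \<cdot> t"
    "\<And>W t1 t2. t1 \<in> Hom W R \<Longrightarrow> t2 \<in> Hom W R \<Longrightarrow> r2 \<cdot> t1 = r1 \<cdot> t2 \<Longrightarrow>
        \<exists>t. t \<in> Hom W R \<and> r1 \<cdot> t = r1 \<cdot> t1 \<and> r2 \<cdot> t = r2 \<cdot> t2"
proof -
  note D = assms[unfolded is_equiv_rel_def Let_def]
  show "r1 \<in> Hom R Y" "r2 \<in> Hom R Y" using D by auto
  show "\<And>W a b. a \<in> Hom W R \<Longrightarrow> b \<in> Hom W R \<Longrightarrow> r1 \<cdot> a = r1 \<cdot> b \<Longrightarrow> r2 \<cdot> a = r2 \<cdot> b \<Longrightarrow> a = b"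
    using D by blast
  show "\<And>W x. x \<in> Hom W Y \<Longrightarrow> \<exists>t. t \<in> Hom W R \<and> r1 \<cdot> t = x \<and> r2 \<cdot> t = x"
  proof -
    fix W x assume x: "x \<in> Hom W Y"
    have "\<forall>x\<in>hom C W Y. \<exists>t\<in>hom C W R. r1 \<cdot> t = x \<and> r2 \<cdot> t = x" using D by blast
    then show "\<exists>t. t \<in> Hom W R \<and> r1 \<cdot> t = x \<and> r2 \<cdot> t = x" using x by blast
  qed
  show "\<And>W t. t \<in> Hom W R \<Longrightarrow> \<exists>t'. t' \<in> Hom W R \<and> r1 \<cdot> t' = r2 \<cdot> t \<and> r2 \<cdot> t' = r1 \<cdot> t"
  proof -
    fix W t assume t: "t \<in> Hom W R"
    have "\<forall>x y. (\<exists>t\<in>hom C W R. r1 \<cdot> t = x \<and> r2 \<cdot> t = y) \<longrightarrow> (\<exists>t\<in>hom C W R. r1 \<cdot> t = y \<and> r2 \<cdot> t = x)"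
      using D by blast
    then show "\<exists>t'. t' \<in> Hom W R \<and> r1 \<cdot> t' = r2 \<cdot> t \<and> r2 \<cdot> t' = r1 \<cdot> t" using t by blast
  qed
  show "\<And>W t1 t2. t1 \<in> Hom W R \<Longrightarrow> t2 \<in> Hom W R \<Longrightarrow> r2 \<cdot> t1 = r1 \<cdot> t2 \<Longrightarrow>
        \<exists>t. t \<in> Hom W R \<and> r1 \<cdot> t = r1 \<cdot> t1 \<and> r2 \<cdot> t = r2 \<cdot> t2"
  proof -
    fix W t1 t2 assume t: "t1 \<in> Hom W R" "t2 \<in> Hom W R" "r2 \<cdot> t1 = r1 \<cdot> t2"
    have "\<forall>x y z. (\<exists>t\<in>hom C W R. r1 \<cdot> t = x \<and> r2 \<cdot> t = y) \<longrightarrow> (\<exists>t\<in>hom C W R. r1 \<cdot> t = y \<and> r2 \<cdot> t = z)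
       \<longrightarrow> (\<exists>t\<in>hom C W R. r1 \<cdot> t = x \<and> r2 \<cdot> t = z)"
      using D by blast
    then show "\<exists>t. t \<in> Hom W R \<and> r1 \<cdot> t = r1 \<cdot> t1 \<and> r2 \<cdot> t = r2 \<cdot> t2" using t
      by (metis (no_types, lifting))
  qed
qed

lemma eqr_I: assumes r: "r1 \<in> Hom R Y" "r2 \<in> Hom R Y"
  and jm: "\<And>W a b. a \<in> Hom W R \<Longrightarrow> b \<in> Hom W R \<Longrightarrow> r1 \<cdot> a = r1 \<cdot> b \<Longrightarrow> r2 \<cdot> a = r2 \<cdot> b \<Longrightarrow> a = b"
  and rf: "\<And>W x. x \<in> Hom W Y \<Longrightarrow> \<exists>t. t \<in> Hom W R \<and> r1 \<cdot> t = x \<and> r2 \<cdot> t = x"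
  and sy: "\<And>W t. t \<in> Hom W R \<Longrightarrow> \<exists>t'. t' \<in> Hom W R \<and> r1 \<cdot> t' = r2 \<cdot> t \<and> r2 \<cdot> t' = r1 \<cdot> t"
  and tr: "\<And>W t1 t2. t1 \<in> Hom W R \<Longrightarrow> t2 \<in> Hom W R \<Longrightarrow> r2 \<cdot> t1 = r1 \<cdot> t2 \<Longrightarrow>
        \<exists>t. t \<in> Hom W R \<and> r1 \<cdot> t = r1 \<cdot> t1 \<and> r2 \<cdot> t = r2 \<cdot> t2"
  shows "is_equiv_rel C Y R r1 r2"
proof -
  have a: "\<forall>x\<in>hom C W Y. \<exists>t\<in>hom C W R. r1 \<cdot> t = x \<and> r2 \<cdot> t = x" for W
    using rf by (metis (no_types, lifting))
  have b: "\<forall>x y. (\<exists>t\<in>hom C W R. r1 \<cdot> t = x \<and> r2 \<cdot> t = y) \<longrightarrow> (\<exists>t\<in>hom C W R. r1 \<cdot> t = y \<and> r2 \<cdot> t = x)" for W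
    using sy by (metis (no_types, lifting))
  have c: "\<forall>x y z. (\<exists>t\<in>hom C W R. r1 \<cdot> t = x \<and> r2 \<cdot> t = y) \<longrightarrow> (\<exists>t\<in>hom C W R. r1 \<cdot> t = y \<and> r2 \<cdot> t = z)
       \<longrightarrow> (\<exists>t\<in>hom C W R. r1 \<cdot> t = x \<and> r2 \<cdot> t = z)" for W
  proof (intro allI impI)
    fix x y z assume "\<exists>t\<in>hom C W R. r1 \<cdot> t = x \<and> r2 \<cdot> t = y" "\<exists>t\<in>hom C W R. r1 \<cdot> t = y \<and> r2 \<cdot> t = z"
    then obtain t1 t2 where "t1 \<in> Hom W R" "r1 \<cdot> t1 = x" "r2 \<cdot> t1 = y" "t2 \<in> Hom W R" "r1 \<cdot> t2 = y" "r2 \<cdot> t2 = z"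
      by blast
    then show "\<exists>t\<in>hom C W R. r1 \<cdot> t = x \<and> r2 \<cdot> t = z" using tr[of t1 W t2] by auto
  qed
  show ?thesis unfolding is_equiv_rel_def Let_def using r jm a b c by blast
qed


lemma eqr_pb: assumes R: "is_equiv_rel C Y R r1 r2" and R': "is_equiv_rel C T R' r1' r2'"
  and ph: "ph \<in> Hom Y T"
  and TT: "is_product C T T TT y1 y2"
  and a: "a \<in> Hom R TT" "y1 \<cdot> a = ph \<cdot> r1" "y2 \<cdot> a = ph \<cdot> r2"
  and b: "b \<in> Hom R' TT" "y1 \<cdot> b = r1'" "y2 \<cdot> b = r2'"
  and L: "is_pullback C R R' TT a b L l l'"
  shows "is_equiv_rel C Y L (r1 \<cdot> l) (r2 \<cdot> l)"
proof -
  note RD = eqr_D[OF R] and RD' = eqr_D[OF R'] and TH = prod_homs[OF TT] and LH = pb_homs[OF L]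
  note HS = RD(1,2) RD'(1,2) ph TH a(1) b(1) LH
  have pj: "ph \<cdot> (r1 \<cdot> (l \<cdot> s)) = r1' \<cdot> (l' \<cdot> s) \<and> ph \<cdot> (r2 \<cdot> (l \<cdot> s)) = r2' \<cdot> (l' \<cdot> s)"
    if s: "s \<in> Hom W L" for s W
  proof -
    have e: "a \<cdot> (l \<cdot> s) = b \<cdot> (l' \<cdot> s)" by (rule eq_lift2[OF LH(13)]) (use s HS in simp_all)
    have "ph \<cdot> (r1 \<cdot> (l \<cdot> s)) = y1 \<cdot> (a \<cdot> (l \<cdot> s))" using lift[OF a(2), of "l \<cdot> s"] s HS by simp
    also have "\<dots> = r1' \<cdot> (l' \<cdot> s)" using e lift[OF b(2), of "l' \<cdot> s"] s HS by simp
    finally have 1: "ph \<cdot> (r1 \<cdot> (l \<cdot> s)) = r1' \<cdot> (l' \<cdot> s)" .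
    have "ph \<cdot> (r2 \<cdot> (l \<cdot> s)) = y2 \<cdot> (a \<cdot> (l \<cdot> s))" using lift[OF a(3), of "l \<cdot> s"] s HS by simp
    also have "\<dots> = r2' \<cdot> (l' \<cdot> s)" using e lift[OF b(3), of "l' \<cdot> s"] s HS by simp
    finally show ?thesis using 1 by simp
  qed
  have pr: "\<exists>v. v \<in> Hom W L \<and> l \<cdot> v = t \<and> l' \<cdot> v = t'"
    if t: "t \<in> Hom W R" "t' \<in> Hom W R'" "ph \<cdot> (r1 \<cdot> t) = r1' \<cdot> t'" "ph \<cdot> (r2 \<cdot> t) = r2' \<cdot> t'" for t t' W
  proof -
    have "a \<cdot> t = b \<cdot> t'"
    proof (rule prod_uniq[OF TT, of _ W])
      show "y1 \<cdot> a \<cdot> t = y1 \<cdot> b \<cdot> t'" using lift[OF a(2), of t] lift[OF b(2), of t'] t HS by simp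
      show "y2 \<cdot> a \<cdot> t = y2 \<cdot> b \<cdot> t'" using lift[OF a(3), of t] lift[OF b(3), of t'] t HS by simp
    qed (use t HS in simp_all)
    then show ?thesis using pb_pair[OF L t(1,2)] by blast
  qed
  show ?thesis
  proof (rule eqr_I)
    show "r1 \<cdot> l \<in> Hom L Y" "r2 \<cdot> l \<in> Hom L Y" using HS by auto
  next
    fix W s1 s2 assume s: "s1 \<in> Hom W L" "s2 \<in> Hom W L" "(r1 \<cdot> l) \<cdot> s1 = (r1 \<cdot> l) \<cdot> s2"
      "(r2 \<cdot> l) \<cdot> s1 = (r2 \<cdot> l) \<cdot> s2"
    have "l \<cdot> s1 = l \<cdot> s2" by (rule RD(3)[of _ W]) (use s HS in simp_all)
    then have "ph \<cdot> (r1 \<cdot> (l \<cdot> s1)) = ph \<cdot> (r1 \<cdot> (l \<cdot> s2))" "ph \<cdot> (r2 \<cdot> (l \<cdot> s1)) = ph \<cdot> (r2 \<cdot> (l \<cdot> s2))" by simp_all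
    then have "r1' \<cdot> (l' \<cdot> s1) = r1' \<cdot> (l' \<cdot> s2)" "r2' \<cdot> (l' \<cdot> s1) = r2' \<cdot> (l' \<cdot> s2)" using pj[OF s(1)] pj[OF s(2)] by simp_all
    then have "l' \<cdot> s1 = l' \<cdot> s2" using RD'(3)[of "l' \<cdot> s1" W "l' \<cdot> s2"] s HS by simp
    then show "s1 = s2" using pb_uniq[OF L s(1,2)] \<open>l \<cdot> s1 = l \<cdot> s2\<close> by simp
  next
    fix W x assume x: "x \<in> Hom W Y"
    obtain t where t: "t \<in> Hom W R" "r1 \<cdot> t = x" "r2 \<cdot> t = x" using RD(4)[OF x] by blast
    obtain t' where t': "t' \<in> Hom W R'" "r1' \<cdot> t' = ph \<cdot> x" "r2' \<cdot> t' = ph \<cdot> x" using RD'(4)[of "ph \<cdot> x" W] x ph by auto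
    obtain v where v: "v \<in> Hom W L" "l \<cdot> v = t" "l' \<cdot> v = t'" using pr[OF t(1) t'(1)] t t' by auto
    show "\<exists>v. v \<in> Hom W L \<and> (r1 \<cdot> l) \<cdot> v = x \<and> (r2 \<cdot> l) \<cdot> v = x" using v t HS by auto
  next
    fix W s assume s: "s \<in> Hom W L"
    obtain u where u: "u \<in> Hom W R" "r1 \<cdot> u = r2 \<cdot> (l \<cdot> s)" "r2 \<cdot> u = r1 \<cdot> (l \<cdot> s)"
      using RD(5)[of "l \<cdot> s" W] s HS by auto
    obtain u' where u': "u' \<in> Hom W R'" "r1' \<cdot> u' = r2' \<cdot> (l' \<cdot> s)" "r2' \<cdot> u' = r1' \<cdot> (l' \<cdot> s)"
      using RD'(5)[of "l' \<cdot> s" W] s HS by auto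
    obtain v where v: "v \<in> Hom W L" "l \<cdot> v = u" "l' \<cdot> v = u'" using pr[OF u(1) u'(1)] u u' pj[OF s] by auto
    show "\<exists>v. v \<in> Hom W L \<and> (r1 \<cdot> l) \<cdot> v = (r2 \<cdot> l) \<cdot> s \<and> (r2 \<cdot> l) \<cdot> v = (r1 \<cdot> l) \<cdot> s"
      using v u s HS by auto
  next
    fix W s1 s2 assume s: "s1 \<in> Hom W L" "s2 \<in> Hom W L" "(r2 \<cdot> l) \<cdot> s1 = (r1 \<cdot> l) \<cdot> s2"
    have s3: "r2 \<cdot> (l \<cdot> s1) = r1 \<cdot> (l \<cdot> s2)" using s HS by simp
    obtain u where u: "u \<in> Hom W R" "r1 \<cdot> u = r1 \<cdot> (l \<cdot> s1)" "r2 \<cdot> u = r2 \<cdot> (l \<cdot> s2)"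
      using RD(6)[of "l \<cdot> s1" W "l \<cdot> s2"] s3 s HS by auto
    have "r2' \<cdot> (l' \<cdot> s1) = r1' \<cdot> (l' \<cdot> s2)" using pj[OF s(1)] pj[OF s(2)] s3 by metis
    then obtain u' where u': "u' \<in> Hom W R'" "r1' \<cdot> u' = r1' \<cdot> (l' \<cdot> s1)" "r2' \<cdot> u' = r2' \<cdot> (l' \<cdot> s2)"
      using RD'(6)[of "l' \<cdot> s1" W "l' \<cdot> s2"] s HS by auto
    obtain v where v: "v \<in> Hom W L" "l \<cdot> v = u" "l' \<cdot> v = u'" using pr[OF u(1) u'(1)] u u' pj[OF s(1)] pj[OF s(2)] by auto
    show "\<exists>v. v \<in> Hom W L \<and> (r1 \<cdot> l) \<cdot> v = (r1 \<cdot> l) \<cdot> s1 \<and> (r2 \<cdot> l) \<cdot> v = (r2 \<cdot> l) \<cdot> s2"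
      using v u s HS by auto
  qed
qed


end

context gen begin

lemma c_normal: assumes tc: "trivial_center C X" shows "bourn_normal_mono C X T c"
proof -
  obtain q where q: "q \<in> Hom G T" "q \<cdot> i = idm T" "q \<cdot> k = c" using q_ex by blast
  have cm: "is_mono C c" using c_mono[OF tc] .
  note G1H = se_homs[OF G1] and G2H = se_homs[OF G2] and PH = prod_homs[OF conjP]
  note FH = fcH and KG = ker_homs[OF se_homs(11)[OF G1]]
  note HS = G1H G2H PH FH(1,2) KG(1-6) q(1)
  have TO: "T \<in> Ob" using G1H by simp
  obtain TT y1 y2 where TT: "is_product C T T TT y1 y2" using prod_ex[OF TO TO] by blast
  note TH = prod_homs[OF TT]
  obtain rho where rho: "rho \<in> Hom G TT" "y1 \<cdot> rho = p1" "y2 \<cdot> rho = q"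
    using prod_pair[OF TT, of p1 G q] G1H q by auto
  have rm: "is_mono C rho"
  proof (rule kernel_mono[OF rho(1)])
    fix W t assume t: "t \<in> Hom W G" "rho \<cdot> t = Z0 W TT"
    have WO: "W \<in> Ob" using t by auto
    have "p1 \<cdot> t = y1 \<cdot> (rho \<cdot> t)" using lift[OF rho(2), of t] t rho TH by simp
    also have "\<dots> = Z0 W T" using t TH WO by simp
    finally obtain h where h: "h \<in> Hom W X" "k \<cdot> h = t" using ker_pair[OF G1H(11) t(1)] by blast
    have "q \<cdot> t = y2 \<cdot> (rho \<cdot> t)" using lift[OF rho(3), of t] t rho TH by simp
    also have "\<dots> = Z0 W T" using t TH WO by simp
    finally have "q \<cdot> (k \<cdot> h) = Z0 W T" using h by simp
    then have "c \<cdot> h = c \<cdot> Z0 W X" using lift[OF q(3), of h] h HS WO by simp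
    then have "h = Z0 W X" using monoD[OF cm, where a=h and b="Z0 W X" and T=W and M=X] h HS WO by simp
    then show "t = Z0 W G" using h HS WO by simp
  qed
  have jm: "\<forall>W a b. a \<in> Hom W G \<longrightarrow> b \<in> Hom W G \<longrightarrow> p1 \<cdot> a = p1 \<cdot> b \<longrightarrow> q \<cdot> a = q \<cdot> b \<longrightarrow> a = b"
  proof (intro allI impI)
    fix W a b assume ab: "a \<in> Hom W G" "b \<in> Hom W G" "p1 \<cdot> a = p1 \<cdot> b" "q \<cdot> a = q \<cdot> b"
    have "rho \<cdot> a = rho \<cdot> b"
    proof (rule prod_uniq[OF TT, of _ W])
      show "y1 \<cdot> rho \<cdot> a = y1 \<cdot> rho \<cdot> b" using lift[OF rho(2)] ab rho TH HS by simp
      show "y2 \<cdot> rho \<cdot> a = y2 \<cdot> rho \<cdot> b" using lift[OF rho(3)] ab rho TH HS by simp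
    qed (use ab rho in simp_all)
    then show "a = b" using monoD[OF rm, where a=a and b=b and T=W and M=G] ab rho by simp
  qed
  have EQ: "is_equiv_rel C T G p1 q"
    by (rule equiv_from_refl[OF _ q(1) jm _ _ q(2)]) (use HS in simp_all)
  have qf: "q \<cdot> f = c \<cdot> q2"
  proof (rule jepi[OF G2])
    show "q \<cdot> f \<in> Hom P T" "c \<cdot> q2 \<in> Hom P T" using HS by auto
    show "(q \<cdot> f) \<cdot> d = (c \<cdot> q2) \<cdot> d" using HS FH d q by simp
    show "(q \<cdot> f) \<cdot> e = (c \<cdot> q2) \<cdot> e" using HS FH e q lift[OF q(2)] by simp
  qed
  show ?thesis unfolding bourn_normal_mono_def
    using FH(1,2,4) cm EQ conjP qf c_pb by blast
qed


lemma conj_any: assumes PP: "is_product C X X P' s1 s2"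
  and d': "d' \<in> Hom X P'" "s1 \<cdot> d' = Z0 X X" "s2 \<cdot> d' = idm X"
  and e': "e' \<in> Hom X P'" "s1 \<cdot> e' = idm X" "s2 \<cdot> e' = idm X"
  and M: "split_ext_mor C P' X d' s1 e' G T k p1 i f' g'"
  shows "g' = c"
proof -
  note PH = prod_homs[OF conjP] and PH' = prod_homs[OF PP]
  have SE': "split_ext C X P' X d' s1 e'"
    unfolding split_ext_def using prod_ker[OF PP d'] d' e' PH' by auto
  obtain j where j: "j \<in> Hom P P'" "s1 \<cdot> j = q1" "s2 \<cdot> j = q2" using prod_pair[OF PP, of q1 P q2] PH by auto
  have jd: "j \<cdot> d = d'"
    by (rule prod_uniq[OF PP, of _ X]) (use j d d' PH PH' lift[OF j(2), of d] lift[OF j(3), of d] in simp_all)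
  have je: "j \<cdot> e = e'"
    by (rule prod_uniq[OF PP, of _ X]) (use j e e' PH PH' lift[OF j(2), of e] lift[OF j(3), of e] in simp_all)
  have MJ: "split_ext_mor C P X d q1 e P' X d' s1 e' j (idm X)"
    unfolding split_ext_mor_def using j jd je PH PH' d' e' by simp
  have "split_ext_mor C P X d q1 e G T k p1 i (f' \<cdot> j) (g' \<cdot> idm X)"
    by (rule mor_comp[OF G2 SE' G1 MJ M])
  then have "g' \<cdot> idm X = c" using conj_uniq by blast
  moreover have "g' \<in> Hom X T" using M unfolding split_ext_mor_def by blast
  ultimately show ?thesis by simp
qed

lemma phi_ex: assumes R: "is_equiv_rel C Y R r1 r2" and PP: "is_product C X X P' s1 s2"
  and n: "n \<in> Hom X Y"
  and mt: "mt \<in> Hom P' R" "r1 \<cdot> mt = n \<cdot> s1" "r2 \<cdot> mt = n \<cdot> s2"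
  and pb: "is_pullback C R X Y r1 n P' mt s1"
  shows "\<exists>ph. ph \<in> Hom Y T \<and> ph \<cdot> n = c"
proof -
  note RD = eqr_D[OF R] and PH' = prod_homs[OF PP] and PBH = pb_homs[OF pb]
  have YO: "Y \<in> Ob" and XO: "X \<in> Ob" using n by auto
  obtain dl where dl: "dl \<in> Hom Y R" "r1 \<cdot> dl = idm Y" "r2 \<cdot> dl = idm Y" using RD(4)[of "idm Y" Y] YO by auto
  obtain d' where d': "d' \<in> Hom X P'" "s1 \<cdot> d' = Z0 X X" "s2 \<cdot> d' = idm X"
    using prod_pair[OF PP, of "Z0 X X" X "idm X"] XO by auto
  obtain e' where e': "e' \<in> Hom X P'" "s1 \<cdot> e' = idm X" "s2 \<cdot> e' = idm X"
    using prod_pair[OF PP, of "idm X" X "idm X"] XO by auto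
  note HS = RD(1,2) PH' PBH n mt(1) dl(1) d'(1) e'(1) XO YO
  have SE: "split_ext C X R Y (mt \<cdot> d') r1 dl" unfolding split_ext_def
  proof (intro conjI)
    show "mt \<cdot> d' \<in> Hom X R" "r1 \<in> Hom R Y" "dl \<in> Hom Y R" "r1 \<cdot> dl = idm Y" using HS dl by auto
    show "is_kernel C X R Y (mt \<cdot> d') r1" unfolding is_kernel_def
    proof (intro conjI allI impI)
      show "mt \<cdot> d' \<in> Hom X R" "r1 \<in> Hom R Y" using HS by auto
      show "r1 \<cdot> mt \<cdot> d' = Z0 X Y" using lift[OF mt(2), of d'] d' HS by simp
      fix W t assume t: "t \<in> Hom W R" "r1 \<cdot> t = Z0 W Y"
      have WO: "W \<in> Ob" using t by auto
      have "r1 \<cdot> t = n \<cdot> Z0 W X" using t n WO HS by simp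
      then obtain h where h: "h \<in> Hom W P'" "mt \<cdot> h = t" "s1 \<cdot> h = Z0 W X"
        using pb_pair[OF pb t(1), of "Z0 W X"] WO XO by auto
      have hd: "d' \<cdot> (s2 \<cdot> h) = h"
        by (rule prod_uniq[OF PP, of _ W]) (use h HS d' lift[OF d'(2), of "s2 \<cdot> h"] lift[OF d'(3), of "s2 \<cdot> h"] in simp_all)
      have kt: "(mt \<cdot> d') \<cdot> (s2 \<cdot> h) = t" using hd h HS by simp
      show "\<exists>!h. h \<in> Hom W X \<and> (mt \<cdot> d') \<cdot> h = t"
      proof (rule ex1I[of _ "s2 \<cdot> h"])
        show "s2 \<cdot> h \<in> Hom W X \<and> (mt \<cdot> d') \<cdot> s2 \<cdot> h = t" using kt h HS by simp
        fix h2 assume h2': "h2 \<in> Hom W X \<and> (mt \<cdot> d') \<cdot> h2 = t"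
        then have h2a: "h2 \<in> Hom W X" and h2b: "(mt \<cdot> d') \<cdot> h2 = t" by auto
        have h2c: "mt \<cdot> (d' \<cdot> h2) = t" using HS h2a h2b by simp
        note h2 = h2a h2c
        have "d' \<cdot> h2 = h"
        proof (rule pb_uniq[OF pb, of _ W])
          show "mt \<cdot> d' \<cdot> h2 = mt \<cdot> h" using HS h h2 by simp
          show "s1 \<cdot> d' \<cdot> h2 = s1 \<cdot> h" using h2 h HS lift[OF d'(2), of h2] by simp
        qed (use h2 h HS in simp_all)
        then have "s2 \<cdot> (d' \<cdot> h2) = s2 \<cdot> h" by simp
        then show "h2 = s2 \<cdot> h" using lift[OF d'(3), of h2] h2 HS by simp
      qed
    qed
  qed
  have SE': "split_ext C X P' X d' s1 e'"
    unfolding split_ext_def using prod_ker[OF PP d'] d' e' PH' by auto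
  have mte: "mt \<cdot> e' = dl \<cdot> n"
  proof (rule RD(3)[of _ X])
    show "r1 \<cdot> mt \<cdot> e' = r1 \<cdot> dl \<cdot> n" using lift[OF mt(2), of e'] lift[OF dl(2), of n] e' HS by simp
    show "r2 \<cdot> mt \<cdot> e' = r2 \<cdot> dl \<cdot> n" using lift[OF mt(3), of e'] lift[OF dl(3), of n] e' HS by simp
  qed (use HS in simp_all)
  have M1: "split_ext_mor C P' X d' s1 e' R Y (mt \<cdot> d') r1 dl mt n"
    unfolding split_ext_mor_def using HS mt mte by simp
  obtain F ph where M2: "split_ext_mor C R Y (mt \<cdot> d') r1 dl G T k p1 i F ph"
    using gen SE unfolding is_generic_split_ext_def by blast
  have "split_ext_mor C P' X d' s1 e' G T k p1 i (F \<cdot> mt) (ph \<cdot> n)"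
    by (rule mor_comp[OF SE' SE G1 M1 M2])
  then have "ph \<cdot> n = c" by (rule conj_any[OF PP d' e'])
  moreover have "ph \<in> Hom Y T" using M2 unfolding split_ext_mor_def by blast
  ultimately show ?thesis by blast
qed


lemma back_dir: assumes tc: "trivial_center C X" and u: "u \<in> Hom S X"
  and cu: "bourn_normal_mono C S T (c \<cdot> u)"
  shows "characteristic_mono C S X u"
  unfolding characteristic_mono_def
proof (intro conjI allI impI)
  show "u \<in> Hom S X" by fact
  fix Y n assume nn: "bourn_normal_mono C X Y n"
  obtain R r1 r2 P1 pi1 pi2 mt where n: "n \<in> Hom X Y" "is_mono C n" and R: "is_equiv_rel C Y R r1 r2"
    and P1: "is_product C X X P1 pi1 pi2" and mt: "mt \<in> Hom P1 R" "r1 \<cdot> mt = n \<cdot> pi1" "r2 \<cdot> mt = n \<cdot> pi2"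
    and pbn: "is_pullback C R X Y r1 n P1 mt pi1"
    using nn unfolding bourn_normal_mono_def by blast
  obtain R' r1' r2' P2 rh1 rh2 mt2 where cuh: "c \<cdot> u \<in> Hom S T" "is_mono C (c \<cdot> u)"
    and R': "is_equiv_rel C T R' r1' r2'"
    and P2: "is_product C S S P2 rh1 rh2" and mt2: "mt2 \<in> Hom P2 R'" "r1' \<cdot> mt2 = (c \<cdot> u) \<cdot> rh1" "r2' \<cdot> mt2 = (c \<cdot> u) \<cdot> rh2"
    and pbc: "is_pullback C R' S T r1' (c \<cdot> u) P2 mt2 rh1"
    using cu unfolding bourn_normal_mono_def by blast
  obtain ph where ph: "ph \<in> Hom Y T" "ph \<cdot> n = c" using phi_ex[OF R P1 n(1) mt pbn] by blast
  have cm: "is_mono C c" by (rule c_mono[OF tc])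
  note G1H = se_homs[OF G1] and FH = fcH
  note RD = eqr_D[OF R] and RD' = eqr_D[OF R'] and P1H = prod_homs[OF P1] and P2H = prod_homs[OF P2]
  have TO: "T \<in> Ob" using G1H by simp
  obtain TT y1 y2 where TT: "is_product C T T TT y1 y2" using prod_ex[OF TO TO] by blast
  note TH = prod_homs[OF TT]
  note HS0 = RD(1,2) RD'(1,2) P1H P2H TH u n(1) ph(1) FH(2) mt(1) mt2(1)
  obtain a where a: "a \<in> Hom R TT" "y1 \<cdot> a = ph \<cdot> r1" "y2 \<cdot> a = ph \<cdot> r2"
    using prod_pair[OF TT, of "ph \<cdot> r1" R "ph \<cdot> r2"] HS0 by auto
  obtain b where b: "b \<in> Hom R' TT" "y1 \<cdot> b = r1'" "y2 \<cdot> b = r2'"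
    using prod_pair[OF TT, of r1' R' r2'] HS0 by auto
  obtain L l l' where L: "is_pullback C R R' TT a b L l l'" using pb_ex[OF a(1) b(1)] by blast
  note LH = pb_homs[OF L]
  have EQL: "is_equiv_rel C Y L (r1 \<cdot> l) (r2 \<cdot> l)" by (rule eqr_pb[OF R R' ph(1) TT a b L])
  obtain uu where uu: "uu \<in> Hom P2 P1" "pi1 \<cdot> uu = u \<cdot> rh1" "pi2 \<cdot> uu = u \<cdot> rh2"
    using prod_pair[OF P1, of "u \<cdot> rh1" P2 "u \<cdot> rh2"] HS0 by auto
  note HS = HS0 a(1) b(1) LH uu(1)
  note LL = lift[OF a(2)] lift[OF a(3)] lift[OF b(2)] lift[OF b(3)] lift[OF mt(2)] lift[OF mt(3)]
    lift[OF uu(2)] lift[OF uu(3)] lift[OF ph(2)] a(2,3) b(2,3) mt(2,3) uu(2,3) ph(2)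
  have pj: "r1' \<cdot> (l' \<cdot> x) = ph \<cdot> (r1 \<cdot> (l \<cdot> x)) \<and> r2' \<cdot> (l' \<cdot> x) = ph \<cdot> (r2 \<cdot> (l \<cdot> x))"
    if x: "x \<in> Hom W L" for x W
  proof -
    have e: "a \<cdot> (l \<cdot> x) = b \<cdot> (l' \<cdot> x)" by (rule eq_lift2[OF LH(13)]) (use x HS in simp_all)
    have "r1' \<cdot> (l' \<cdot> x) = y1 \<cdot> (b \<cdot> (l' \<cdot> x))" using lift[OF b(2), of "l' \<cdot> x"] x HS by simp
    also have "\<dots> = ph \<cdot> (r1 \<cdot> (l \<cdot> x))" using e[symmetric] lift[OF a(2), of "l \<cdot> x"] x HS by simp
    finally have 1: "r1' \<cdot> (l' \<cdot> x) = ph \<cdot> (r1 \<cdot> (l \<cdot> x))" .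
    have "r2' \<cdot> (l' \<cdot> x) = y2 \<cdot> (b \<cdot> (l' \<cdot> x))" using lift[OF b(3), of "l' \<cdot> x"] x HS by simp
    also have "\<dots> = ph \<cdot> (r2 \<cdot> (l \<cdot> x))" using e[symmetric] lift[OF a(3), of "l \<cdot> x"] x HS by simp
    finally show ?thesis using 1 by simp
  qed
  have "a \<cdot> (mt \<cdot> uu) = b \<cdot> mt2"
  proof (rule prod_uniq[OF TT, of _ P2])
    show "y1 \<cdot> a \<cdot> mt \<cdot> uu = y1 \<cdot> b \<cdot> mt2" using HS LL mt2 by simp
    show "y2 \<cdot> a \<cdot> mt \<cdot> uu = y2 \<cdot> b \<cdot> mt2" using HS LL mt2 by simp
  qed (use HS in simp_all)
  then obtain mL where mL: "mL \<in> Hom P2 L" "l \<cdot> mL = mt \<cdot> uu" "l' \<cdot> mL = mt2"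
    using pb_pair[OF L, of "mt \<cdot> uu" P2 mt2] HS by auto
  have umono: "u \<cdot> x = u \<cdot> x' \<Longrightarrow> x \<in> Hom W S \<Longrightarrow> x' \<in> Hom W S \<Longrightarrow> x = x'" for x x' W
  proof -
    assume xx: "u \<cdot> x = u \<cdot> x'" "x \<in> Hom W S" "x' \<in> Hom W S"
    have "(c \<cdot> u) \<cdot> x = (c \<cdot> u) \<cdot> x'" using xx HS by simp
    then show "x = x'" using monoD[OF cuh(2), where a=x and b=x' and T=W and M=S] xx HS by simp
  qed
  show "bourn_normal_mono C S Y (n \<cdot> u)" unfolding bourn_normal_mono_def
  proof (intro conjI exI)
    show nu: "n \<cdot> u \<in> Hom S Y" using HS by simp
    show "is_mono C (n \<cdot> u)"
    proof (rule monoI[OF nu])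
      fix W x x' assume xx: "x \<in> Hom W S" "x' \<in> Hom W S" "(n \<cdot> u) \<cdot> x = (n \<cdot> u) \<cdot> x'"
      have "n \<cdot> (u \<cdot> x) = n \<cdot> (u \<cdot> x')" using xx HS by simp
      then have "u \<cdot> x = u \<cdot> x'" using monoD[OF n(2), where a="u \<cdot> x" and b="u \<cdot> x'" and T=W and M=X] xx HS by simp
      then show "x = x'" using umono xx by blast
    qed
    show "is_equiv_rel C Y L (r1 \<cdot> l) (r2 \<cdot> l)" by (rule EQL)
    show "is_product C S S P2 rh1 rh2" by (rule P2)
    show "mL \<in> Hom P2 L" by (rule mL(1))
    have "r1 \<cdot> (l \<cdot> mL) = n \<cdot> (u \<cdot> rh1)" using mL HS LL by simp
    then show "(r1 \<cdot> l) \<cdot> mL = (n \<cdot> u) \<cdot> rh1" using mL HS by simp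
    have "r2 \<cdot> (l \<cdot> mL) = n \<cdot> (u \<cdot> rh2)" using mL HS LL by simp
    then show "(r2 \<cdot> l) \<cdot> mL = (n \<cdot> u) \<cdot> rh2" using mL HS by simp
    show "is_pullback C L S Y (r1 \<cdot> l) (n \<cdot> u) P2 mL rh1" unfolding is_pullback_def
    proof (intro conjI allI impI)
      show "r1 \<cdot> l \<in> Hom L Y" "n \<cdot> u \<in> Hom S Y" "mL \<in> Hom P2 L" "rh1 \<in> Hom P2 S" using HS mL by auto
      show "(r1 \<cdot> l) \<cdot> mL = (n \<cdot> u) \<cdot> rh1" using \<open>r1 \<cdot> (l \<cdot> mL) = n \<cdot> (u \<cdot> rh1)\<close> mL HS by simp
      fix W x y assume x: "x \<in> Hom W L" and y: "y \<in> Hom W S" and xy: "(r1 \<cdot> l) \<cdot> x = (n \<cdot> u) \<cdot> y"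
      have WO: "W \<in> Ob" using x by auto
      have xy': "r1 \<cdot> (l \<cdot> x) = n \<cdot> (u \<cdot> y)" using HS x y xy by simp
      obtain h1 where h1: "h1 \<in> Hom W P1" "mt \<cdot> h1 = l \<cdot> x" "pi1 \<cdot> h1 = u \<cdot> y"
        using pb_pair[OF pbn, of "l \<cdot> x" W "u \<cdot> y"] xy' x y HS by auto
      have "r1' \<cdot> (l' \<cdot> x) = ph \<cdot> (r1 \<cdot> (l \<cdot> x))" using pj[OF x] by simp
      also have "\<dots> = (c \<cdot> u) \<cdot> y" using xy' LL x y HS by simp
      finally obtain h2 where h2: "h2 \<in> Hom W P2" "mt2 \<cdot> h2 = l' \<cdot> x" "rh1 \<cdot> h2 = y"
        using pb_pair[OF pbc, of "l' \<cdot> x" W y] x y HS by auto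
      have "c \<cdot> (pi2 \<cdot> h1) = ph \<cdot> (n \<cdot> (pi2 \<cdot> h1))" using LL h1 HS by simp
      also have "\<dots> = ph \<cdot> (r2 \<cdot> (mt \<cdot> h1))" using lift[OF mt(3), of h1] h1(1) HS by simp
      also have "\<dots> = ph \<cdot> (r2 \<cdot> (l \<cdot> x))" using h1 by simp
      also have "\<dots> = r2' \<cdot> (l' \<cdot> x)" using pj[OF x] by simp
      also have "\<dots> = r2' \<cdot> (mt2 \<cdot> h2)" using h2 by simp
      also have "\<dots> = c \<cdot> (u \<cdot> (rh2 \<cdot> h2))" using lift[OF mt2(3), of h2] h2 HS by simp
      finally have "c \<cdot> (pi2 \<cdot> h1) = c \<cdot> (u \<cdot> (rh2 \<cdot> h2))" .
      then have x2: "pi2 \<cdot> h1 = u \<cdot> (rh2 \<cdot> h2)"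
        using monoD[OF cm, where a="pi2 \<cdot> h1" and b="u \<cdot> (rh2 \<cdot> h2)" and T=W and M=X] h1 h2 HS by simp
      have h1u: "uu \<cdot> h2 = h1"
      proof (rule prod_uniq[OF P1, of _ W])
        show "pi1 \<cdot> uu \<cdot> h2 = pi1 \<cdot> h1" using h1 h2 HS LL by simp
        show "pi2 \<cdot> uu \<cdot> h2 = pi2 \<cdot> h1" using h1 h2 HS LL x2 by simp
      qed (use h1 h2 HS in simp_all)
      have mh: "mL \<cdot> h2 = x"
      proof (rule pb_uniq[OF L, of _ W])
        have "l \<cdot> (mL \<cdot> h2) = (mt \<cdot> uu) \<cdot> h2" using lift[OF mL(2), of h2] mL h2 HS by simp
        also have "\<dots> = mt \<cdot> h1" using h1u h2 HS by simp
        finally show "l \<cdot> mL \<cdot> h2 = l \<cdot> x" using h1 by simp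
        have "l' \<cdot> (mL \<cdot> h2) = mt2 \<cdot> h2" using lift[OF mL(3), of h2] mL h2 HS by simp
        then show "l' \<cdot> mL \<cdot> h2 = l' \<cdot> x" using h2 by simp
      qed (use mL h2 x HS in simp_all)
      show "\<exists>!h. h \<in> Hom W P2 \<and> mL \<cdot> h = x \<and> rh1 \<cdot> h = y"
      proof (rule ex1I[of _ h2])
        show "h2 \<in> Hom W P2 \<and> mL \<cdot> h2 = x \<and> rh1 \<cdot> h2 = y" using h2 mh by simp
        fix h assume hh: "h \<in> Hom W P2 \<and> mL \<cdot> h = x \<and> rh1 \<cdot> h = y"
        have "l' \<cdot> (mL \<cdot> h) = mt2 \<cdot> h" using lift[OF mL(3), of h] mL hh HS by simp
        then have "mt2 \<cdot> h = mt2 \<cdot> h2" using hh h2 by simp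
        then show "h = h2" using pb_uniq[OF pbc, of h W h2] hh h2 by simp
      qed
    qed
  qed
qed

end

theorem theorem5p3:
  fixes C :: "('o, 'm) category"
  assumes "is_category C" and "pointed C" and "has_finite_limits C" and "protomodular C"
    and "X \<in> cobj C"
    and "trivial_center C X"
    and "is_generic_split_ext C X G T k p1 i"
    and "is_conjugation C X G T k p1 i c"
    and "u \<in> hom C S X"
  shows "characteristic_mono C S X u \<longleftrightarrow> bourn_normal_mono C S T (cmp C c u)"
proof -
  interpret pcat C using assms(1-4) by unfold_locales
  obtain P q1 q2 d e f where cj: "is_product C X X P q1 q2"
    "d \<in> hom C X P" "cmp C q1 d = zero C X X" "cmp C q2 d = cid C X"
    "e \<in> hom C X P" "cmp C q1 e = cid C X" "cmp C q2 e = cid C X"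
    "split_ext_mor C P X d q1 e G T k p1 i f c"
    using assms(8) unfolding is_conjugation_def by blast
  interpret gen C X G T k p1 i c P q1 q2 d e f
    by unfold_locales (use assms(7) cj in simp_all)
  show ?thesis
  proof
    assume "characteristic_mono C S X u"
    then show "bourn_normal_mono C S T (cmp C c u)"
      using c_normal[OF assms(6)] unfolding characteristic_mono_def by blast
  next
    assume "bourn_normal_mono C S T (cmp C c u)"
    then show "characteristic_mono C S X u" by (rule back_dir[OF assms(6) assms(9)])
  qed
qed


end
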